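(* Let $\mathcal S$ be a non-degenerate affine zipper with signature $(0,\dots,0)$ whose matrices have dominated splitting of index-1, and assume $v$ is symmetric. Then for every $\mathbf i\in\Sigma$, $$\alpha(\pi(\mathbf i))\ge\liminf_{n\to\infty}\frac{\log\|A_{\mathbf i|_n}\|}{\log\lambda_{\mathbf i|_n}}.$$
   Context: Affine zipper with signature $(0,\dots,0)$: $f_i(x)=A_ix+t_i$ ($i=0,\dots,N-1$) on $\mathbb R^d$, $A_i$ invertible, each $f_i$ a contraction, vertices $z_0,\dots,z_N$ with $f_i(z_0)=z_i$, $f_i(z_N)=z_{i+1}$; $\Gamma=\bigcup_if_i(\Gamma)$. Fix a probability vector $\lambda$ with $\lambda_i>0$; $g_i(x)=\lambda_ix+\gamma_i$, $\gamma_i=\sum_{j<i}\lambda_j$; $v:[0,1]\to\mathbb R^d$ the unique continuous function with $v(x)=f_i(v(g_i^{-1}(x)))$ for $x\in g_i([0,1])$; $\alpha(x)=\liminf_{y\to x}\frac{\log\|v(x)-v(y)\|}{\log|x-y|}$. For a word $\bar\imath=i_1\dots i_k$: $A_{\bar\imath}=A_{i_1}\cdots A_{i_k}$, $\lambda_{\bar\imath}=\lambda_{i_1}\cdots\lambda_{i_k}$. Euclidean operator norms. Dominated splitting of index-1: there is a nonempty open $M\subset\mathbb{PR}^{d-1}$ (projective action; $\langle w\rangle$ the line through $w\ne0$) with finitely many components with pairwise disjoint closures, $\bigcup_iA_i\overline M\subset M^o$, and some hyperplane transverse to all elements of $\overline M$. Non-degenerate: there is a bounded open $U$ with $f_i(U)\cap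 f_j(U)=\emptyset$ ($i\ne j$), $\Gamma\cap U\ne\emptyset$, and $\langle z_N-z_0\rangle\notin\bigcap_{k\ge0}\bigcap_{|\bar\imath|=k}A_{\bar\imath}^{-1}(M^c)$. Symmetric: $\lambda_0=\lambda_{N-1}$ and $\lim_{k\to\infty}\|A_0^k\|/\|A_{N-1}^k\|=1$. Symbolic: $\Sigma=\{0,\dots,N-1\}^{\mathbb N}$, $\mathbf i|_n=i_1\dots i_n$; $\pi(\mathbf i)=\sum_{n\ge1}\lambda_{\mathbf i|_{n-1}}\gamma_{i_n}\in[0,1]$. *)

theory Defs
  imports "HOL-Analysis.Analysis"
begin

definition word_mat :: "(nat \<Rightarrow> real^'d^'d) \<Rightarrow> nat list \<Rightarrow> real^'d^'d" where
  "word_mat A w = foldr (\<lambda>i M. A i ** M) w (mat 1)"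

definition words :: "nat \<Rightarrow> nat \<Rightarrow> nat list set" where
  "words N k = {w. length w = k \<and> (\<forall>i\<in>set w. i < N)}"

text \<open>Restriction i|_n of an infinite word (0-based: letters i 0, ..., i (n-1)).\<close>
definition prefix_word :: "(nat \<Rightarrow> nat) \<Rightarrow> nat \<Rightarrow> nat list" where
  "prefix_word ii n = map ii [0..<n]"

definition opnorm :: "real^'d^'d \<Rightarrow> real" where
  "opnorm M = onorm (\<lambda>x. M *v x)"

definition proj_line :: "real^'d \<Rightarrow> (real^'d) set" where
  "proj_line w = span {w}"

definition proj_space :: "(real^'d) set set" where
  "proj_space = {proj_line w | w. w \<noteq> 0}"

text \<open>Quotient topology on the projective space.\<close>
definition proj_top :: "(real^'d) set topology" where
  "proj_top = topology (\<lambda>U. U \<subseteq> proj_space \<and> open {w. w \<noteq> 0 \<and> proj_line w \<in> U})"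

definition proj_act :: "real^'d^'d \<Rightarrow> (real^'d) set \<Rightarrow> (real^'d) set" where
  "proj_act M l = (\<lambda>x. M *v x) ` l"

definition dominated_splitting_index1 ::
  "nat \<Rightarrow> (nat \<Rightarrow> real^'d^'d) \<Rightarrow> (real^'d) set set \<Rightarrow> bool" where
  "dominated_splitting_index1 N A M \<longleftrightarrow>
     M \<noteq> {} \<and> openin proj_top M \<and>
     finite (connected_components_of (subtopology proj_top M)) \<and>
     pairwise (\<lambda>C D. disjnt (proj_top closure_of C) (proj_top closure_of D))
       (connected_components_of (subtopology proj_top M)) \<and>
     (\<Union>i<N. proj_act (A i) ` (proj_top closure_of M)) \<subseteq> proj_top interior_of M \<and>
     (\<exists>a::real^'d. a \<noteq> 0 \<and>
        (\<forall>l \<in> proj_top closure_of M. \<not> l \<subseteq> {x. a \<bullet> x = 0}))"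

definition contraction :: "(real^'d \<Rightarrow> real^'d) \<Rightarrow> bool" where
  "contraction f \<longleftrightarrow> (\<exists>c<1. \<forall>x y. dist (f x) (f y) \<le> c * dist x y)"

definition gam :: "(nat \<Rightarrow> real) \<Rightarrow> nat \<Rightarrow> real" where
  "gam lam i = (\<Sum>j<i. lam j)"

text \<open>Coding map pi(i) = sum_{n>=1} lambda_{i|n-1} gamma_{i_n} (0-based indexing).\<close>
definition coding :: "(nat \<Rightarrow> real) \<Rightarrow> (nat \<Rightarrow> nat) \<Rightarrow> real" where
  "coding lam ii = (\<Sum>n. (\<Prod>k<n. lam (ii k)) * gam lam (ii n))"

text \<open>Pointwise Hoelder exponent alpha(x); log 0 = -infinity gives ratio +infinity.\<close>
definition holder_exp :: "(real \<Rightarrow> real^'d) \<Rightarrow> real \<Rightarrow> ereal" where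
  "holder_exp v x = Liminf (at x within {0..1})
     (\<lambda>y. if v y = v x then \<infinity> else ereal (ln (norm (v x - v y)) / ln \<bar>x - y\<bar>))"

end

theory Submission
  imports Defs
begin


lemma opnorm_mul: "norm (M *v x) \<le> opnorm M * norm x"
  unfolding opnorm_def by (rule onorm) (rule matrix_vector_mul_bounded_linear)

lemma opnorm_nonneg: "opnorm M \<ge> 0"
  unfolding opnorm_def by (rule onorm_pos_le) (rule matrix_vector_mul_bounded_linear)

lemma opnorm_prod: "opnorm (M ** M') \<le> opnorm M * opnorm M'"
proof -
  have "onorm ((*v) M \<circ> (*v) M') \<le> onorm ((*v) M) * onorm ((*v) M')"
    by (rule onorm_compose) auto
  moreover have "((*v) M \<circ> (*v) M') = (*v) (M ** M')"
    by (auto simp: matrix_vector_mul_assoc)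
  ultimately show ?thesis unfolding opnorm_def by simp
qed

lemma opnorm_le: "(\<And>x. norm (M *v x) \<le> b * norm x) \<Longrightarrow> opnorm M \<le> b"
  unfolding opnorm_def by (rule onorm_le)

lemma word_mat_Nil[simp]: "word_mat A [] = mat 1"
  by (simp add: word_mat_def)
lemma word_mat_Cons[simp]: "word_mat A (j # w) = A j ** word_mat A w"
  by (simp add: word_mat_def)
lemma word_mat_append: "word_mat A (w1 @ w2) = word_mat A w1 ** word_mat A w2"
  by (induction w1) (auto simp: matrix_mul_assoc)

lemma opnorm_word_append: "opnorm (word_mat A (w1 @ w2)) \<le> opnorm (word_mat A w1) * opnorm (word_mat A w2)"
  by (simp add: word_mat_append opnorm_prod)

fun gw :: "(nat \<Rightarrow> real) \<Rightarrow> nat list \<Rightarrow> real \<Rightarrow> real" where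
  "gw lam [] s = s" | "gw lam (j # w) s = lam j * gw lam w s + gam lam j"

definition lamw :: "(nat \<Rightarrow> real) \<Rightarrow> nat list \<Rightarrow> real" where
  "lamw lam w = prod_list (map lam w)"

lemma lamw_simps[simp]: "lamw lam [] = 1" "lamw lam (j # w) = lam j * lamw lam w"
  by (auto simp: lamw_def)
lemma lamw_append: "lamw lam (w1 @ w2) = lamw lam w1 * lamw lam w2"
  by (auto simp: lamw_def)

lemma gw_affine: "gw lam w s = gw lam w 0 + lamw lam w * s"
  by (induction w) (auto simp: algebra_simps)

lemma gw_append: "gw lam (w1 @ w2) s = gw lam w1 (gw lam w2 s)"
  by (induction w1) auto


lemma gam_0[simp]: "gam lam 0 = 0" by (simp add: gam_def)
lemma gam_Suc: "gam lam (Suc j) = gam lam j + lam j" by (simp add: gam_def)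

locale zip =
  fixes N :: nat and A :: "nat \<Rightarrow> real^'d^'d" and t :: "nat \<Rightarrow> real^'d"
    and lam :: "nat \<Rightarrow> real" and v :: "real \<Rightarrow> real^'d" and D :: real
  assumes N2: "N \<ge> 2"
    and lam_pos: "\<forall>i<N. lam i > 0"
    and lam_sum: "(\<Sum>i<N. lam i) = 1"
    and v_eq: "\<forall>i<N. \<forall>x \<in> (\<lambda>y. lam i * y + gam lam i) ` {0..1}.
                  v x = A i *v v ((x - gam lam i) / lam i) + t i"
    and Dbound: "\<forall>s\<in>{0..1}. \<forall>s'\<in>{0..1}. norm (v s - v s') \<le> D"
    and normA: "\<forall>j<N. opnorm (A j) \<le> 1"
begin

lemma gam_N: "gam lam N = 1" using lam_sum by (simp add: gam_def)

lemma gam_mono: "j \<le> k \<Longrightarrow> k \<le> N \<Longrightarrow> gam lam j \<le> gam lam k"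
  unfolding gam_def using lam_pos
  by (intro sum_mono2) (auto intro: less_imp_le)

lemma gam_nonneg: "j \<le> N \<Longrightarrow> gam lam j \<ge> 0"
  using gam_mono[of 0 j] by simp

lemma gam_le1: "j \<le> N \<Longrightarrow> gam lam j \<le> 1"
  using gam_mono[of j N] gam_N by simp

lemma gam_lam_le1: "j < N \<Longrightarrow> gam lam j + lam j \<le> 1"
  using gam_le1[of "Suc j"] by (simp add: gam_Suc)

lemma lam_le1: "j < N \<Longrightarrow> lam j \<le> 1"
  using gam_lam_le1[of j] gam_nonneg[of j] by simp

lemma lam_lt1: "j < N \<Longrightarrow> lam j < 1"
proof -
  assume j: "j < N"
  obtain k where k: "k < N" "k \<noteq> j"
  proof (cases "j = 0")
    case True thus ?thesis using N2 that[of 1] by auto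
  next
    case False thus ?thesis using N2 that[of 0] by auto
  qed
  have "lam j + lam k \<le> (\<Sum>i<N. lam i)"
  proof -
    have "(\<Sum>i\<in>{j,k}. lam i) \<le> (\<Sum>i<N. lam i)"
      using lam_pos j k by (intro sum_mono2) (auto intro: less_imp_le)
    thus ?thesis using k by simp
  qed
  thus ?thesis using lam_sum lam_pos k by auto
qed

lemma D_nonneg: "D \<ge> 0"
proof -
  have "norm (v 0 - v 0) \<le> D" using Dbound[rule_format, of 0 0] by simp
  thus ?thesis by simp
qed

lemma lamw_pos: "set w \<subseteq> {..<N} \<Longrightarrow> lamw lam w > 0"
  by (induction w) (use lam_pos in auto)

lemma lamw_le1: "set w \<subseteq> {..<N} \<Longrightarrow> lamw lam w \<le> 1"
proof (induction w)
  case (Cons j w)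
  hence "lam j \<le> 1" "lamw lam w \<le> 1" "0 \<le> lamw lam w" using lam_le1[of j] lamw_pos[of w] by auto
  thus ?case using mult_le_one[of "lam j" "lamw lam w"] by simp
qed simp

lemma gw_range: "set w \<subseteq> {..<N} \<Longrightarrow> s \<in> {0..1} \<Longrightarrow> gw lam w s \<in> {0..1}"
proof (induction w)
  case (Cons j w)
  hence j: "j < N" and g: "gw lam w s \<in> {0..1}" by auto
  have "lam j * gw lam w s \<le> lam j" using g lam_pos j by (auto intro: mult_left_le)
  moreover have "0 \<le> lam j * gw lam w s" using g lam_pos j by auto
  ultimately show ?case using gam_lam_le1[OF j] gam_nonneg[of j] j by auto
qed simp

lemma v_step: "j < N \<Longrightarrow> g \<in> {0..1} \<Longrightarrow> v (lam j * g + gam lam j) = A j *v v g + t j"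
  using v_eq lam_pos by force

lemma v_gw: "set w \<subseteq> {..<N} \<Longrightarrow> s \<in> {0..1} \<Longrightarrow> s' \<in> {0..1} \<Longrightarrow>
   v (gw lam w s) - v (gw lam w s') = word_mat A w *v (v s - v s')"
proof (induction w)
  case Nil thus ?case by (simp add: matrix_vector_mul_lid)
next
  case (Cons j w)
  hence j: "j < N" and w: "set w \<subseteq> {..<N}" by auto
  have "v (gw lam (j#w) s) - v (gw lam (j#w) s') = A j *v (v (gw lam w s) - v (gw lam w s'))"
    using v_step[OF j gw_range[OF w Cons.prems(2)]] v_step[OF j gw_range[OF w Cons.prems(3)]]
    by (simp add: matrix_vector_mult_diff_distrib)
  also have "\<dots> = word_mat A (j#w) *v (v s - v s')" using Cons w by (simp add: matrix_vector_mul_assoc)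
  finally show ?case .
qed

lemma cyl_bound:
  assumes w: "set w \<subseteq> {..<N}" and y: "y \<in> {gw lam w 0..gw lam w 1}" and y': "y' \<in> {gw lam w 0..gw lam w 1}"
  shows "norm (v y - v y') \<le> opnorm (word_mat A w) * D"
proof -
  have lp: "lamw lam w > 0" by (rule lamw_pos[OF w])
  define s where "s = (y - gw lam w 0) / lamw lam w"
  define s' where "s' = (y' - gw lam w 0) / lamw lam w"
  have g1: "gw lam w 1 = gw lam w 0 + lamw lam w" using gw_affine[of lam w 1] by simp
  have s: "s \<in> {0..1}" "s' \<in> {0..1}" using y y' lp g1 by (auto simp: s_def s'_def field_simps)
  have ys: "y = gw lam w s" "y' = gw lam w s'"
    using lp gw_affine[of lam w s] gw_affine[of lam w s'] by (auto simp: s_def s'_def)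
  have "norm (v y - v y') = norm (word_mat A w *v (v s - v s'))"
    using v_gw[OF w s] ys by simp
  also have "\<dots> \<le> opnorm (word_mat A w) * norm (v s - v s')" by (rule opnorm_mul)
  also have "\<dots> \<le> opnorm (word_mat A w) * D"
    using Dbound s by (intro mult_left_mono opnorm_nonneg) auto
  finally show ?thesis .
qed

lemma opnorm_word_le1: "set w \<subseteq> {..<N} \<Longrightarrow> opnorm (word_mat A w) \<le> 1"
proof (induction w)
  case Nil
  have "opnorm (mat 1 :: real^'d^'d) \<le> 1" by (rule opnorm_le) (simp add: matrix_vector_mul_lid)
  thus ?case by simp
next
  case (Cons j w)
  have "opnorm (word_mat A (j#w)) \<le> opnorm (A j) * opnorm (word_mat A w)"
    by (simp add: opnorm_prod)
  also have "\<dots> \<le> 1" using Cons normA by (auto intro: mult_le_one opnorm_nonneg)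
  finally show ?case .
qed

end


lemma prefix_word_0[simp]: "prefix_word ii 0 = []" by (simp add: prefix_word_def)
lemma prefix_word_Suc: "prefix_word ii (Suc n) = prefix_word ii n @ [ii n]"
  by (simp add: prefix_word_def)
lemma prefix_word_add: "prefix_word ii (n + k) = prefix_word ii n @ map ii [n..<n+k]"
  unfolding prefix_word_def using upt_add_eq_append[of 0 n k] by simp
lemma lamw_replicate: "lamw lam (replicate m c) = lam c ^ m"
  by (induction m) auto

context zip begin

lemma prefix_set: "\<forall>n. ii n < N \<Longrightarrow> set (prefix_word ii n) \<subseteq> {..<N}"
  by (auto simp: prefix_word_def)

lemma gw_rep_last: "gw lam (replicate k (N - 1)) 1 = 1"
proof (induction k)
  case (Suc k)
  have "gam lam (N - 1) + lam (N - 1) = 1" using gam_N gam_Suc[of lam "N - 1"] N2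
    by (metis Suc_diff_1 add_leE bot_nat_0.not_eq_extremum not_numeral_le_zero)
  thus ?case using Suc by simp
qed simp

lemma gw_rep_0: "gw lam (replicate m 0) s = lam 0 ^ m * s"
  by (induction m) auto

definition Lmin where "Lmin = Min (lam ` {..<N})"

lemma N_ne: "{..<N} \<noteq> {}"
proof
  assume "{..<N} = {}" hence "(0::nat) \<notin> {..<N}" by simp
  thus False using N2 by simp
qed

lemma Lmin_pos: "Lmin > 0"
  unfolding Lmin_def using lam_pos N_ne by (subst Min_gr_iff) auto

lemma Lmin_le: "j < N \<Longrightarrow> Lmin \<le> lam j"
  unfolding Lmin_def by auto

lemma Lmin_le1: "Lmin \<le> 1" using Lmin_le[of 0] lam_le1[of 0] N2 by auto

definition rho where "rho = Max (lam ` {..<N})"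

lemma rho_lt1: "rho < 1"
  unfolding rho_def using lam_lt1 N_ne by (subst Max_less_iff) auto

lemma lam_le_rho: "j < N \<Longrightarrow> lam j \<le> rho"
  unfolding rho_def by auto

lemma lamw_le_rho: "set w \<subseteq> {..<N} \<Longrightarrow> lamw lam w \<le> rho ^ length w"
proof (induction w)
  case (Cons j w)
  hence "lam j \<le> rho" "lamw lam w \<le> rho ^ length w" "0 \<le> lam j" "0 \<le> lamw lam w"
    using lam_le_rho lam_pos lamw_pos[of w] by (auto intro: less_imp_le)
  thus ?case by (simp add: mult_mono)
qed simp

lemma exists_m:
  fixes s q :: real
  assumes "0 < s" "s \<le> 1" "0 < q" "q < 1"
  shows "\<exists>m. q ^ Suc m < s \<and> s \<le> q ^ m"
proof -
  have "\<exists>m. q ^ m < s"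
    using real_arch_pow_inv[of s q] assms by auto
  define m1 where "m1 = (LEAST m. q ^ m < s)"
  have m1: "q ^ m1 < s" using LeastI_ex[OF \<open>\<exists>m. q ^ m < s\<close>] unfolding m1_def .
  have "m1 \<noteq> 0"
  proof
    assume "m1 = 0" thus False using m1 assms by simp
  qed
  then obtain m where "m1 = Suc m" by (cases m1) auto
  moreover have "\<not> q ^ m < s" using not_less_Least[of m "\<lambda>m. q ^ m < s"] \<open>m1 = Suc m\<close> m1_def by auto
  ultimately show ?thesis using m1 by (auto intro!: exI[of _ m])
qed

end

locale core = zip N A t lam v D for N :: nat and A :: "nat \<Rightarrow> real^'d^'d" and t lam v D +
  fixes ii :: "nat \<Rightarrow> nat" and x :: real and C beta Q :: real
  assumes QM: "\<forall>u a m. set u \<subseteq> {..<N} \<longrightarrow> a < N \<longrightarrow>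
      opnorm (word_mat A u) * opnorm (word_mat A (replicate m 0))
        \<le> Q * opnorm (word_mat A (u @ a # replicate m (N - 1)))"
    and Q_nonneg: "Q \<ge> 0"
    and sym_lam: "lam 0 = lam (N - 1)"
    and ii_lt: "\<forall>n. ii n < N"
    and beta_pos: "beta > 0"
    and Cb: "\<forall>n. opnorm (word_mat A (prefix_word ii n)) \<le> C * lamw lam (prefix_word ii n) powr beta"
    and x_in: "\<forall>n. x \<in> {gw lam (prefix_word ii n) 0 .. gw lam (prefix_word ii n) 1}"
begin

lemma C_nonneg: "C \<ge> 0"
  using Cb[rule_format, of 0] opnorm_nonneg[of "mat 1 :: real^'d^'d"] by simp

lemma pre_set: "set (prefix_word ii n) \<subseteq> {..<N}" using prefix_set ii_lt by auto

lemma core_bound: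
  "\<exists>K. \<forall>y. x < y \<and> y \<le> 1 \<longrightarrow> norm (v y - v x) \<le> K * (y - x) powr beta"
proof -
  define K where "K = C * D * (1 / Lmin) powr beta + (Q + 1) * C * D * (1 / Lmin^2) powr beta"
  have "norm (v y - v x) \<le> K * (y - x) powr beta" if xy: "x < y" "y \<le> 1" for y
  proof -
    let ?R = "\<lambda>n. gw lam (prefix_word ii n) 1"
    let ?L = "\<lambda>n. gw lam (prefix_word ii n) 0"
    have RL: "?R n = ?L n + lamw lam (prefix_word ii n)" for n
      using gw_affine[of lam "prefix_word ii n" 1] by simp
    have ex: "\<exists>n. ?R n < y"
    proof -
      obtain n where n: "rho ^ n < y - x"
        using real_arch_pow_inv[of "y - x" rho] rho_lt1 xy by auto
      have "?R n \<le> x + lamw lam (prefix_word ii n)" using RL x_in by auto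
      also have "\<dots> \<le> x + rho ^ n" using lamw_le_rho[OF pre_set, of n] by (simp add: prefix_word_def)
      finally show ?thesis using n by (intro exI[of _ n]) linarith
    qed
    define n1 where "n1 = (LEAST n. ?R n < y)"
    have n1: "?R n1 < y" using LeastI_ex[OF ex] unfolding n1_def .
    have "n1 \<noteq> 0"
    proof
      assume "n1 = 0" thus False using n1 xy by simp
    qed
    then obtain n where n1n: "n1 = Suc n" by (cases n1) auto
    have Rn: "y \<le> ?R n" using not_less_Least[of n "\<lambda>n. ?R n < y"] n1n n1_def by auto
    define u where "u = prefix_word ii n"
    define a where "a = ii n"
    have u: "set u \<subseteq> {..<N}" using pre_set u_def by auto
    have aN: "a < N" using ii_lt a_def by auto
    have pSuc: "prefix_word ii (Suc n) = u @ [a]" by (simp add: u_def a_def prefix_word_Suc)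
    have lu: "lamw lam u > 0" using lamw_pos[OF u] .
    have R1: "?R (Suc n) = gw lam u (gam lam a + lam a)" using pSuc by (simp add: gw_append add.commute)
    have a1: "a < N - 1"
    proof (rule ccontr)
      assume "\<not> a < N - 1"
      hence "a = N - 1" using aN by auto
      hence "Suc a = N" using aN by simp
      hence "gam lam a + lam a = 1" using gam_N gam_Suc[of lam a] by simp
      thus False using R1 Rn n1 n1n u_def by auto
    qed
    define b where "b = Suc a"
    have bN: "b < N" using a1 b_def by auto
    define p where "p = gw lam u (gam lam b)"
    have gb: "gam lam b = gam lam a + lam a" by (simp add: b_def gam_Suc)
    have pR: "p = ?R (Suc n)" using R1 gb p_def by simp
    have xp: "x \<le> p" using x_in pR by auto
    have xL: "x \<ge> gw lam u 0" using x_in u_def by auto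
    have Ru: "?R n = gw lam u 1" using u_def by simp
    have ub0: "gw lam (u @ [b]) 0 = p" by (simp add: gw_append p_def)
    have ub1: "gw lam (u @ [b]) 1 = p + lamw lam u * lam b"
      using gw_affine[of lam u "lam b + gam lam b"] gw_affine[of lam u "gam lam b"]
      by (simp add: gw_append p_def algebra_simps)
    have Lm: "Lmin > 0" "Lmin \<le> 1" "Lmin \<le> lam b" "Lmin \<le> lam 0" "Lmin \<le> lam (N - 1)"
      using Lmin_pos Lmin_le1 Lmin_le bN N2 by auto
    have Kpos: "C * D * (1 / Lmin) powr beta \<ge> 0" "(Q + 1) * C * D * (1 / Lmin^2) powr beta \<ge> 0"
      using C_nonneg D_nonneg Q_nonneg by auto
    show ?thesis
    proof (cases "y > p + lamw lam u * lam b")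
      case True
      have yI: "y \<in> {gw lam u 0..gw lam u 1}" using xL xy Rn Ru by auto
      have xI: "x \<in> {gw lam u 0..gw lam u 1}" using x_in[rule_format, of n] u_def by simp
      have "norm (v y - v x) \<le> opnorm (word_mat A u) * D"
        by (rule cyl_bound[OF u yI xI])
      also have "\<dots> \<le> C * lamw lam u powr beta * D"
        using Cb[rule_format, of n] D_nonneg unfolding u_def by (rule mult_right_mono)
      also have "\<dots> \<le> C * ((y - x) / Lmin) powr beta * D"
      proof -
        have "lamw lam u \<le> (y - x) / lam b" using True xp lam_pos bN by (simp add: field_simps)
        also have "\<dots> \<le> (y - x) / Lmin" using Lm xy by (intro divide_left_mono) auto
        finally have "lamw lam u powr beta \<le> ((y - x) / Lmin) powr beta"
          using lu beta_pos by (intro powr_mono2) auto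
        thus ?thesis using C_nonneg D_nonneg by (intro mult_right_mono mult_left_mono) auto
      qed
      also have "\<dots> = C * D * (1 / Lmin) powr beta * (y - x) powr beta"
      proof -
        have pd: "((y - x) / Lmin) powr beta = (1 / Lmin) powr beta * (y - x) powr beta"
          using Lm xy by (simp add: powr_divide)
        show ?thesis by (subst pd) (simp add: ac_simps)
      qed
      also have "\<dots> \<le> K * (y - x) powr beta"
        unfolding K_def using Kpos by (intro mult_right_mono) simp_all
      finally show ?thesis .
    next
      case False
      define s where "s = (y - p) / (lamw lam u * lam b)"
      have lub: "lamw lam u * lam b > 0" using lu lam_pos bN by auto
      have yp: "y > p" using n1 n1n pR by auto
      have s01: "0 < s" "s \<le> 1" using False yp lub by (auto simp: s_def field_simps)
      obtain m where m: "lam 0 ^ Suc m < s" "s \<le> lam 0 ^ m"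
        using exists_m[OF s01] lam_pos lam_lt1 N2 by force
      define P where "P = (\<lambda>j. ii (Suc n + j) \<noteq> N - 1)"
      define k where "k = (if \<exists>j<m. P j then LEAST j. P j else m)"
      have km: "k \<le> m"
      proof (cases "\<exists>j<m. P j")
        case True
        then obtain j where "j < m" "P j" by auto
        hence "(LEAST j. P j) \<le> j" by (rule_tac Least_le) 
        thus ?thesis using True \<open>j < m\<close> k_def by auto
      next
        case False thus ?thesis unfolding k_def by auto
      qed
      have kpre: "\<forall>l<k. ii (Suc n + l) = N - 1"
      proof (cases "\<exists>j<m. P j")
        case True
        thus ?thesis using not_less_Least[of _ P] k_def P_def by auto
      next
        case False thus ?thesis using k_def P_def by auto
      qed
      have kc: "P k" if kl: "k < m"
      proof (cases "\<exists>j<m. P j")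
        case True
        thus ?thesis using LeastI_ex[of P] k_def by auto
      next
        case False
        hence "k = m" unfolding k_def by (simp only: if_False)
        thus ?thesis using kl by simp
      qed
      define w3 where "w3 = u @ a # replicate k (N - 1)"
      have w3p: "prefix_word ii (Suc n + k) = w3"
      proof -
        have "map ii [Suc n..<Suc n + k] = replicate k (N - 1)"
          by (rule nth_equalityI) (use kpre in \<open>auto simp del: upt_Suc simp add: nth_map_upt\<close>)
        thus ?thesis using prefix_word_add[of ii "Suc n" k] pSuc w3_def by simp
      qed
      have w3s: "set w3 \<subseteq> {..<N}" using w3p pre_set by metis
      have lw3: "lamw lam w3 > 0" using lamw_pos[OF w3s] .
      have w31: "gw lam w3 1 = p"
      proof -
        have "gw lam w3 1 = gw lam u (lam a * gw lam (replicate k (N - 1)) 1 + gam lam a)"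
          by (simp add: w3_def gw_append del: replicate.simps)
        thus ?thesis using gw_rep_last[of k] pR R1 by (simp add: add.commute)
      qed
      have w30: "gw lam w3 0 = p - lamw lam w3" using gw_affine[of lam w3 1] w31 by simp
      define w2 where "w2 = u @ b # replicate m 0"
      have w2s: "set w2 \<subseteq> {..<N}" using u bN N2 by (auto simp: w2_def)
      have w20: "gw lam w2 0 = p" using ub0 by (simp add: w2_def gw_append gw_rep_0)
      have w21: "gw lam w2 1 \<ge> y"
      proof -
        have "gw lam w2 1 = gw lam (u @ [b]) (lam 0 ^ m)" by (simp add: w2_def gw_append gw_rep_0)
        also have "\<dots> = p + lamw lam u * lam b * lam 0 ^ m"
          using gw_affine[of lam "u @ [b]" "lam 0 ^ m"] ub0 by (simp add: lamw_append)
        finally show ?thesis using m(2) lub unfolding s_def by (simp add: field_simps)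
      qed
      have e1: "norm (v y - v p) \<le> opnorm (word_mat A w2) * D"
        using cyl_bound[OF w2s, of y p] w20 w21 yp by auto
      have e2: "opnorm (word_mat A w2) \<le> opnorm (word_mat A u) * opnorm (word_mat A (replicate k 0))"
      proof -
        have f1: "opnorm (word_mat A w2) \<le> opnorm (word_mat A u) * opnorm (word_mat A (b # replicate m 0))"
          unfolding w2_def by (rule opnorm_word_append)
        have f2: "opnorm (word_mat A (b # replicate m 0)) \<le> opnorm (word_mat A (replicate m 0))"
        proof -
          have "opnorm (word_mat A (b # replicate m 0)) \<le> opnorm (A b) * opnorm (word_mat A (replicate m 0))"
            using opnorm_prod[of "A b" "word_mat A (replicate m 0)"] by simp
          also have "\<dots> \<le> 1 * opnorm (word_mat A (replicate m 0))"
            using normA bN opnorm_nonneg[of "word_mat A (replicate m 0)"] by (intro mult_right_mono) auto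
          finally show ?thesis by simp
        qed
        have f3: "opnorm (word_mat A (replicate m 0)) \<le> opnorm (word_mat A (replicate k 0))"
        proof -
          have "replicate m (0::nat) = replicate k 0 @ replicate (m - k) 0" using km
            by (metis le_add_diff_inverse replicate_add)
          hence g1: "opnorm (word_mat A (replicate m 0)) \<le> opnorm (word_mat A (replicate k 0)) * opnorm (word_mat A (replicate (m - k) 0))"
            using opnorm_word_append by metis
          have g2: "opnorm (word_mat A (replicate (m - k) 0)) \<le> 1" using N2 by (intro opnorm_word_le1) auto
          have "opnorm (word_mat A (replicate k 0)) * opnorm (word_mat A (replicate (m - k) 0)) \<le> opnorm (word_mat A (replicate k 0)) * 1"
            using g2 opnorm_nonneg[of "word_mat A (replicate k 0)"] by (rule mult_left_mono)
          thus ?thesis using g1 by simp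
        qed
        have "opnorm (word_mat A u) * opnorm (word_mat A (b # replicate m 0)) \<le> opnorm (word_mat A u) * opnorm (word_mat A (replicate k 0))"
          using f2 f3 opnorm_nonneg[of "word_mat A u"] by (intro mult_left_mono) auto
        thus ?thesis using f1 by linarith
      qed
      have e3: "opnorm (word_mat A u) * opnorm (word_mat A (replicate k 0)) \<le> Q * opnorm (word_mat A w3)"
        using QM u aN w3_def by auto
      have e4: "opnorm (word_mat A w3) \<le> C * lamw lam w3 powr beta" using Cb w3p by metis
      have e5: "Q * opnorm (word_mat A w3) \<le> Q * (C * lamw lam w3 powr beta)"
        using e4 Q_nonneg by (rule mult_left_mono)
      have "opnorm (word_mat A w2) \<le> Q * (C * lamw lam w3 powr beta)" using e2 e3 e5 by linarith
      hence "opnorm (word_mat A w2) * D \<le> Q * (C * lamw lam w3 powr beta) * D"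
        using D_nonneg by (rule mult_right_mono)
      hence t1: "norm (v y - v p) \<le> Q * (C * lamw lam w3 powr beta) * D" using e1 by linarith
      have t2: "norm (v p - v x) \<le> C * lamw lam w3 powr beta * D"
      proof -
        have "norm (v p - v x) \<le> opnorm (word_mat A w3) * D"
          using cyl_bound[OF w3s, of p x] x_in[rule_format, of "Suc n + k"] w3p w30 w31 lw3 by auto
        moreover have "opnorm (word_mat A w3) * D \<le> C * lamw lam w3 powr beta * D"
          using Cb w3p D_nonneg by (metis mult_right_mono)
        ultimately show ?thesis by linarith
      qed
      have lam3: "lamw lam w3 \<le> (y - x) / Lmin^2"
      proof (cases "k = m")
        case True
        have "lamw lam w3 = lamw lam u * lam a * lam 0 ^ m"
          using True sym_lam by (simp add: w3_def lamw_append lamw_replicate)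
        also have "\<dots> \<le> lamw lam u * lam 0 ^ m"
          using lam_le1[OF aN] lu lam_pos N2 by (simp add: mult_left_le)
        also have "\<dots> = lamw lam u * lam b * lam 0 ^ Suc m / (lam b * lam 0)"
        proof -
          have "lam b > 0" "lam 0 > 0" using lam_pos bN N2 by auto
          thus ?thesis by (simp add: field_simps)
        qed
        also have "\<dots> \<le> (y - p) / (lam b * lam 0)"
        proof -
          have "lam b > 0" "lam 0 > 0" using lam_pos bN N2 by auto
          thus ?thesis using m(1) lub unfolding s_def by (intro divide_right_mono) (auto simp: field_simps)
        qed
        also have "\<dots> \<le> (y - x) / (Lmin * Lmin)"
          using Lm xp yp by (intro frac_le mult_mono) auto
        finally show ?thesis by (simp add: power2_eq_square)
      next
        case False
        hence kl: "k < m" using km by auto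
        define c where "c = ii (Suc n + k)"
        have cN: "c < N - 1" using kc[OF kl] ii_lt[rule_format, of "Suc n + k"] unfolding c_def P_def by linarith
        have "x \<le> gw lam (prefix_word ii (Suc (Suc n + k))) 1" using x_in by auto
        also have "\<dots> = gw lam w3 (gam lam (Suc c))"
          using w3p by (simp add: prefix_word_Suc gw_append c_def gam_Suc add.commute)
        also have "\<dots> = p - lamw lam w3 + lamw lam w3 * gam lam (Suc c)"
          using gw_affine[of lam w3 "gam lam (Suc c)"] w30 by simp
        also have "\<dots> \<le> p - lamw lam w3 + lamw lam w3 * (1 - lam (N - 1))"
        proof -
          have "gam lam (Suc c) \<le> gam lam (N - 1)" using cN by (intro gam_mono) auto
          moreover have "gam lam (N - 1) = 1 - lam (N - 1)"
            using gam_N gam_Suc[of lam "N - 1"] N2 by (metis Suc_diff_1 add_diff_cancel_right' gr0I not_numeral_le_zero)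
          ultimately show ?thesis using lw3 by (intro add_left_mono mult_left_mono) auto
        qed
        finally have "lamw lam w3 * lam (N - 1) \<le> p - x" by (simp add: algebra_simps)
        hence "lamw lam w3 \<le> (y - x) / lam (N - 1)" using yp lam_pos N2 by (simp add: field_simps)
        also have "\<dots> \<le> (y - x) / Lmin" using Lm xy by (intro divide_left_mono) auto
        also have "\<dots> \<le> (y - x) / Lmin^2"
        proof -
          have "Lmin^2 \<le> Lmin" using Lm mult_left_le_one_le[of Lmin Lmin] by (simp add: power2_eq_square)
          thus ?thesis using Lm xy by (intro divide_left_mono) auto
        qed
        finally show ?thesis .
      qed
      have "norm (v y - v x) \<le> norm (v y - v p) + norm (v p - v x)"
        using norm_triangle_ineq[of "v y - v p" "v p - v x"] by simp
      also have "\<dots> \<le> (Q + 1) * C * D * lamw lam w3 powr beta"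
        using t1 t2 by (simp add: algebra_simps)
      also have "\<dots> \<le> (Q + 1) * C * D * ((y - x) / Lmin^2) powr beta"
        using lam3 lw3 beta_pos C_nonneg D_nonneg Q_nonneg by (intro mult_left_mono powr_mono2) auto
      also have "\<dots> = (Q + 1) * C * D * (1 / Lmin^2) powr beta * (y - x) powr beta"
        using Lm xy by (simp add: powr_divide)
      also have "\<dots> \<le> K * (y - x) powr beta"
        unfolding K_def using Kpos by (intro mult_right_mono) simp_all
      finally show ?thesis .
    qed
  qed
  thus ?thesis by blast
qed

end


lemma span_single: "span {w} = range (\<lambda>k. k *\<^sub>R (w::real^'d))"
  by (simp add: span_singleton)

lemma proj_line_scale: "c \<noteq> 0 \<Longrightarrow> proj_line (c *\<^sub>R w) = proj_line (w::real^'d)"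
  unfolding proj_line_def span_single
proof (intro set_eqI iffI)
  fix x assume c: "c \<noteq> 0" and "x \<in> range (\<lambda>k. k *\<^sub>R c *\<^sub>R w)"
  then obtain k where "x = k *\<^sub>R c *\<^sub>R w" by auto
  thus "x \<in> range (\<lambda>k. k *\<^sub>R w)" by auto
next
  fix x assume c: "c \<noteq> 0" and "x \<in> range (\<lambda>k. k *\<^sub>R w)"
  then obtain k where "x = k *\<^sub>R w" by auto
  hence "x = (k / c) *\<^sub>R c *\<^sub>R w" using c by simp
  thus "x \<in> range (\<lambda>k. k *\<^sub>R c *\<^sub>R w)" by blast
qed

lemma proj_act_line: "proj_act B (proj_line w) = proj_line (B *v w)"
  unfolding proj_act_def proj_line_def span_single
  by (auto simp: matrix_vector_mult_scaleR image_iff)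

lemma istop_proj: "istopology (\<lambda>U. U \<subseteq> (proj_space :: (real^'d) set set) \<and> open {w. w \<noteq> 0 \<and> proj_line w \<in> U})"
proof -
  have 1: "open {w::real^'d. w \<noteq> 0 \<and> proj_line w \<in> S \<inter> T}"
    if "open {w::real^'d. w \<noteq> 0 \<and> proj_line w \<in> S}" "open {w::real^'d. w \<noteq> 0 \<and> proj_line w \<in> T}" for S T
  proof -
    have "{w::real^'d. w \<noteq> 0 \<and> proj_line w \<in> S \<inter> T} = {w. w \<noteq> 0 \<and> proj_line w \<in> S} \<inter> {w. w \<noteq> 0 \<and> proj_line w \<in> T}"
      by auto
    thus ?thesis using that by (simp add: open_Int)
  qed
  have 2: "open {w::real^'d. w \<noteq> 0 \<and> proj_line w \<in> \<Union>K}"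
    if "\<forall>U\<in>K. open {w::real^'d. w \<noteq> 0 \<and> proj_line w \<in> U}" for K
  proof -
    have "{w::real^'d. w \<noteq> 0 \<and> proj_line w \<in> \<Union>K} = \<Union>((\<lambda>U. {w. w \<noteq> 0 \<and> proj_line w \<in> U}) ` K)"
      by auto
    moreover have "open (\<Union>((\<lambda>U. {w::real^'d. w \<noteq> 0 \<and> proj_line w \<in> U}) ` K))"
      using that by (intro open_Union) auto
    ultimately show ?thesis by simp
  qed
  show ?thesis unfolding istopology_def using 1 2 by blast
qed

lemma openin_proj: "openin proj_top U \<longleftrightarrow> U \<subseteq> proj_space \<and> open {w. w \<noteq> 0 \<and> proj_line w \<in> U}"
  unfolding proj_top_def topology_inverse'[OF istop_proj] by simp

lemma line_in_space: "w \<noteq> 0 \<Longrightarrow> proj_line w \<in> proj_space"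
  unfolding proj_space_def by auto

lemma topspace_proj: "topspace (proj_top :: (real^'d) set topology) = proj_space"
proof
  show "topspace proj_top \<subseteq> (proj_space :: (real^'d) set set)" unfolding topspace_def using openin_proj by auto
  have "{w. w \<noteq> 0 \<and> proj_line w \<in> proj_space} = {w::real^'d. w \<noteq> 0}" using line_in_space by auto
  moreover have "open {w::real^'d. w \<noteq> 0}"
  proof -
    have "{w::real^'d. w \<noteq> 0} = UNIV - {0}" by auto
    thus ?thesis using open_delete[of UNIV 0] by simp
  qed
  ultimately have "openin proj_top (proj_space :: (real^'d) set set)" unfolding openin_proj by simp
  thus "(proj_space :: (real^'d) set set) \<subseteq> topspace proj_top" by (rule openin_subset)
qed

lemma closure_line:
  assumes "openin proj_top M" and z: "z \<in> closure {w. w \<noteq> 0 \<and> proj_line w \<in> M}" "z \<noteq> 0"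
  shows "proj_line z \<in> proj_top closure_of M"
  unfolding in_closure_of
proof (intro conjI allI impI)
  show "proj_line z \<in> topspace proj_top" using topspace_proj line_in_space z by auto
  fix T assume T: "proj_line z \<in> T \<and> openin proj_top T"
  hence o: "open {w. w \<noteq> 0 \<and> proj_line w \<in> T}" using openin_proj by auto
  have "z \<in> {w. w \<noteq> 0 \<and> proj_line w \<in> T}" using T z by auto
  then obtain w where "w \<in> {w. w \<noteq> 0 \<and> proj_line w \<in> M}" "w \<in> {w. w \<noteq> 0 \<and> proj_line w \<in> T}"
  proof -
    have "{w. w \<noteq> 0 \<and> proj_line w \<in> T} \<inter> closure {w. w \<noteq> 0 \<and> proj_line w \<in> M} \<noteq> {}"
      using \<open>z \<in> {w. w \<noteq> 0 \<and> proj_line w \<in> T}\<close> z(1) by auto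
    hence "{w. w \<noteq> 0 \<and> proj_line w \<in> T} \<inter> {w. w \<noteq> 0 \<and> proj_line w \<in> M} \<noteq> {}"
      using open_Int_closure_eq_empty[OF o] by blast
    thus ?thesis using that by blast
  qed
  thus "\<exists>y. y \<in> M \<and> y \<in> T" by auto
qed


locale domsp =
  fixes N :: nat and A :: "nat \<Rightarrow> real^'d^'d" and M :: "(real^'d) set set"
  assumes N1: "N \<ge> 1"
    and inv: "\<forall>i<N. invertible (A i)"
    and dom: "dominated_splitting_index1 N A M"
begin

definition S :: "(real^'d) set" where "S = {w. w \<noteq> 0 \<and> proj_line w \<in> M}"

lemma M_open: "openin proj_top M" using dom unfolding dominated_splitting_index1_def by auto
lemma M_ne: "M \<noteq> {}" using dom unfolding dominated_splitting_index1_def by auto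
lemma M_inv: "\<And>i. i < N \<Longrightarrow> proj_act (A i) ` (proj_top closure_of M) \<subseteq> proj_top interior_of M"
  using dom unfolding dominated_splitting_index1_def by auto
lemma M_trans: "\<exists>a::real^'d. a \<noteq> 0 \<and> (\<forall>l \<in> proj_top closure_of M. \<not> l \<subseteq> {x. a \<bullet> x = 0})"
  using dom unfolding dominated_splitting_index1_def by auto

lemma S_open: "open S" using M_open openin_proj unfolding S_def by auto

lemma A_nz: "i < N \<Longrightarrow> z \<noteq> 0 \<Longrightarrow> A i *v z \<noteq> 0"
proof -
  assume i: "i < N" and z: "z \<noteq> 0"
  obtain B where "B ** A i = mat 1" using inv i unfolding invertible_def by auto
  hence "B *v (A i *v z) = z" by (simp add: matrix_vector_mul_assoc matrix_vector_mul_lid)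
  thus ?thesis using z by auto
qed

lemma S_scale: "w \<in> S \<Longrightarrow> c \<noteq> 0 \<Longrightarrow> c *\<^sub>R w \<in> S"
  unfolding S_def by (auto simp: proj_line_scale)

lemma clS_to_S: "z \<in> closure S \<Longrightarrow> z \<noteq> 0 \<Longrightarrow> i < N \<Longrightarrow> A i *v z \<in> S"
proof -
  assume z: "z \<in> closure S" "z \<noteq> 0" and i: "i < N"
  have "proj_line z \<in> proj_top closure_of M" using closure_line[OF M_open] z unfolding S_def by auto
  hence "proj_act (A i) (proj_line z) \<in> proj_top interior_of M" using M_inv[OF i] by auto
  hence "proj_line (A i *v z) \<in> M" using interior_of_subset[of proj_top M] proj_act_line[of "A i" z] by auto
  thus ?thesis unfolding S_def using A_nz[OF i z(2)] by auto
qed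

lemma S_to_S: "z \<in> S \<Longrightarrow> i < N \<Longrightarrow> A i *v z \<in> S"
  using clS_to_S closure_subset S_def by blast

lemma word_S: "set w \<subseteq> {..<N} \<Longrightarrow> z \<in> S \<Longrightarrow> word_mat A w *v z \<in> S"
proof (induction w)
  case Nil thus ?case by (simp add: matrix_vector_mul_lid)
next
  case (Cons j w)
  hence "word_mat A w *v z \<in> S" "j < N" by auto
  thus ?case using S_to_S by (simp add: matrix_vector_mul_assoc[symmetric])
qed

definition avec where "avec = (SOME a::real^'d. a \<noteq> 0 \<and> (\<forall>l \<in> proj_top closure_of M. \<not> l \<subseteq> {x. a \<bullet> x = 0}))"

lemma avec: "avec \<noteq> 0" "\<forall>l \<in> proj_top closure_of M. \<not> l \<subseteq> {x. avec \<bullet> x = 0}"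
  using someI_ex[OF M_trans] unfolding avec_def by auto

lemma avec_clS: "z \<in> closure S \<Longrightarrow> z \<noteq> 0 \<Longrightarrow> avec \<bullet> z \<noteq> 0"
proof
  assume z: "z \<in> closure S" "z \<noteq> 0" and az: "avec \<bullet> z = 0"
  have "proj_line z \<in> proj_top closure_of M" using closure_line[OF M_open] z unfolding S_def by auto
  moreover have "proj_line z \<subseteq> {x. avec \<bullet> x = 0}"
    unfolding proj_line_def span_single using az by (auto simp: inner_scaleR_right)
  ultimately show False using avec(2) by auto
qed

definition T where "T = closure (S \<inter> sphere 0 1)"

lemma T_compact: "compact T" unfolding T_def by (simp add: bounded_Int)

lemma T_sub: "z \<in> T \<Longrightarrow> z \<in> closure S \<and> norm z = 1"
proof -
  assume z: "z \<in> T"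
  have "closure (S \<inter> sphere 0 1) \<subseteq> closure S" by (simp add: closure_mono)
  moreover have "closure (S \<inter> sphere 0 1) \<subseteq> sphere 0 1" by (simp add: closure_minimal)
  ultimately show ?thesis using z unfolding T_def by auto
qed

lemma S_T: "w \<in> S \<Longrightarrow> (1 / norm w) *\<^sub>R w \<in> T"
proof -
  assume w: "w \<in> S"
  hence w0: "w \<noteq> 0" unfolding S_def by auto
  have "(1 / norm w) *\<^sub>R w \<in> S" using S_scale[OF w] w0 by auto
  moreover have "(1 / norm w) *\<^sub>R w \<in> sphere 0 1" using w0 by auto
  ultimately show ?thesis unfolding T_def using closure_subset by blast
qed

lemma delta_ex: "\<exists>\<delta>>0. \<forall>z\<in>T. \<delta> \<le> \<bar>avec \<bullet> z\<bar>"
proof (cases "T = {}")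
  case True thus ?thesis by (auto intro: exI[of _ 1])
next
  case False
  have "continuous_on T (\<lambda>z. \<bar>avec \<bullet> z\<bar>)" by (intro continuous_intros)
  then obtain z0 where z0: "z0 \<in> T" "\<forall>y\<in>T. \<bar>avec \<bullet> z0\<bar> \<le> \<bar>avec \<bullet> y\<bar>"
    using continuous_attains_inf[OF T_compact False] by blast
  have "z0 \<noteq> 0" using T_sub[OF z0(1)] by force
  hence "avec \<bullet> z0 \<noteq> 0" using T_sub[OF z0(1)] avec_clS[of z0] by auto
  thus ?thesis using z0 by (intro exI[of _ "\<bar>avec \<bullet> z0\<bar>"]) auto
qed

definition delta where "delta = (SOME \<delta>. \<delta> > 0 \<and> (\<forall>z\<in>T. \<delta> \<le> \<bar>avec \<bullet> z\<bar>))"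

lemma delta: "delta > 0" "\<forall>z\<in>T. delta \<le> \<bar>avec \<bullet> z\<bar>"
  using someI_ex[OF delta_ex] unfolding delta_def by auto

lemma delta_S: "w \<in> S \<Longrightarrow> delta * norm w \<le> \<bar>avec \<bullet> w\<bar>"
proof -
  assume w: "w \<in> S"
  hence w0: "w \<noteq> 0" unfolding S_def by auto
  have "delta \<le> \<bar>avec \<bullet> ((1 / norm w) *\<^sub>R w)\<bar>" using delta(2) S_T[OF w] by auto
  also have "\<dots> = \<bar>avec \<bullet> w\<bar> / norm w" by (simp add: inner_scaleR_right)
  finally show ?thesis using w0 by (simp add: field_simps)
qed

definition K' where "K' = (\<Union>j<N. (\<lambda>z. (1 / norm (A j *v z)) *\<^sub>R (A j *v z)) ` T)"

lemma K'_compact: "compact K'"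
  unfolding K'_def
proof (intro compact_UN)
  fix j assume j: "j \<in> {..<N}"
  have nz: "\<forall>z\<in>T. norm (A j *v z) \<noteq> 0"
  proof
    fix z assume "z \<in> T"
    hence "z \<noteq> 0" using T_sub by force
    thus "norm (A j *v z) \<noteq> 0" using A_nz[of j z] j by auto
  qed
  have c1: "continuous_on T (\<lambda>z. A j *v z)"
    by (rule linear_continuous_on) (rule matrix_vector_mul_bounded_linear)
  have c2: "continuous_on T (\<lambda>z. 1 / norm (A j *v z))"
    using continuous_on_const continuous_on_norm[OF c1] nz by (rule continuous_on_divide)
  have "continuous_on T (\<lambda>z. (1 / norm (A j *v z)) *\<^sub>R (A j *v z))"
    using c2 c1 by (rule continuous_on_scaleR)
  thus "compact ((\<lambda>z. (1 / norm (A j *v z)) *\<^sub>R (A j *v z)) ` T)"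
    using T_compact by (rule compact_continuous_image)
qed simp

lemma K'_S: "K' \<subseteq> S"
proof
  fix x assume "x \<in> K'"
  then obtain j z where j: "j < N" and z: "z \<in> T" and x: "x = (1 / norm (A j *v z)) *\<^sub>R (A j *v z)"
    unfolding K'_def by auto
  have z0: "z \<noteq> 0" using T_sub[OF z] by auto
  have "A j *v z \<in> S" using clS_to_S T_sub[OF z] z0 j by auto
  thus "x \<in> S" using x S_scale A_nz[OF j z0] by auto
qed

lemma K'_norm: "x \<in> K' \<Longrightarrow> norm x = 1"
proof -
  assume "x \<in> K'"
  then obtain j z where j: "j < N" and z: "z \<in> T" and x: "x = (1 / norm (A j *v z)) *\<^sub>R (A j *v z)"
    unfolding K'_def by auto
  have "z \<noteq> 0" using T_sub[OF z] by force
  hence "A j *v z \<noteq> 0" using A_nz j by auto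
  thus ?thesis using x by simp
qed

lemma r_ex: "\<exists>r>0. \<forall>x\<in>K'. ball x r \<subseteq> S"
proof -
  obtain e where "0 < e" "\<And>x. x \<in> K' \<Longrightarrow> \<exists>G\<in>{S}. ball x e \<subseteq> G"
    using Heine_Borel_lemma[OF K'_compact, of "{S}"] K'_S S_open by auto
  thus ?thesis by auto
qed

definition rr where "rr = (SOME r. r > 0 \<and> (\<forall>x\<in>K'. ball x r \<subseteq> S))"
lemma rr: "rr > 0" "\<forall>x\<in>K'. ball x rr \<subseteq> S"
  using someI_ex[OF r_ex] unfolding rr_def by auto

lemma S_to_K': "z \<in> S \<Longrightarrow> j < N \<Longrightarrow> (1 / norm (A j *v z)) *\<^sub>R (A j *v z) \<in> K'"
proof -
  assume z: "z \<in> S" and j: "j < N"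
  have z0: "z \<noteq> 0" using z S_def by auto
  define z' where "z' = (1 / norm z) *\<^sub>R z"
  have z'T: "z' \<in> T" using S_T[OF z] z'_def by auto
  have "A j *v z' = (1 / norm z) *\<^sub>R (A j *v z)" by (simp add: z'_def matrix_vector_mult_scaleR)
  hence "(1 / norm (A j *v z')) *\<^sub>R (A j *v z') = (1 / norm (A j *v z)) *\<^sub>R (A j *v z)"
    using z0 by (simp add: field_simps)
  moreover have "(1 / norm (A j *v z')) *\<^sub>R (A j *v z') \<in> (\<lambda>z. (1 / norm (A j *v z)) *\<^sub>R (A j *v z)) ` T"
    using z'T by (rule imageI)
  ultimately show ?thesis using j unfolding K'_def by auto
qed

end


context domsp begin

lemma key_vec:
  assumes B: "\<forall>w\<in>S. B *v w \<in> S" and x: "x \<in> K'" and y: "norm y = 1"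
  shows "delta * (rr / 2) * norm (B *v y) \<le> (2 * norm avec + delta) * norm (B *v x)"
proof -
  define r' where "r' = rr / 2"
  have r'pos: "r' > 0" "r' < rr" using rr(1) r'_def by auto
  have seg: "x + s *\<^sub>R y \<in> S" if "\<bar>s\<bar> \<le> r'" for s
  proof -
    have "dist x (x + s *\<^sub>R y) < rr" using that y r'pos by (simp add: dist_norm)
    hence "x + s *\<^sub>R y \<in> ball x rr" by simp
    thus ?thesis using rr(2) x by blast
  qed
  define f where "f = (\<lambda>s. avec \<bullet> (B *v x) + s * (avec \<bullet> (B *v y)))"
  have fB: "f s = avec \<bullet> (B *v (x + s *\<^sub>R y))" for s
    by (simp add: f_def matrix_vector_right_distrib matrix_vector_mult_scaleR inner_add_right inner_scaleR_right)
  have fnz: "f s \<noteq> 0" if "\<bar>s\<bar> \<le> r'" for s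
  proof -
    have w: "B *v (x + s *\<^sub>R y) \<in> S" using B seg[OF that] by auto
    hence "B *v (x + s *\<^sub>R y) \<noteq> 0" unfolding S_def by auto
    hence "delta * norm (B *v (x + s *\<^sub>R y)) > 0" using delta(1) by auto
    thus ?thesis using delta_S[OF w] fB by auto
  qed
  have fc: "continuous_on {-r'..r'} f" unfolding f_def by (intro continuous_intros)
  have sgn: "f r' * f (-r') > 0"
  proof (rule ccontr)
    assume "\<not> f r' * f (-r') > 0"
    hence "f (-r') \<le> 0 \<and> 0 \<le> f r' \<or> f r' \<le> 0 \<and> 0 \<le> f (-r')"
    proof -
      have "\<not> (f r' > 0 \<and> f (-r') > 0)" using \<open>\<not> f r' * f (-r') > 0\<close> mult_pos_pos by blast
      moreover have "\<not> (f r' < 0 \<and> f (-r') < 0)" using \<open>\<not> f r' * f (-r') > 0\<close> mult_neg_neg by blast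
      ultimately show ?thesis by linarith
    qed
    moreover have "-r' \<le> r'" using r'pos by simp
    ultimately obtain s where "-r' \<le> s" "s \<le> r'" "f s = 0"
      using IVT'[of f "-r'" 0 r', OF _ _ _ fc] IVT2'[of f r' 0 "-r'", OF _ _ _ fc] by blast
    thus False using fnz[of s] by (simp add: abs_le_iff)
  qed
  define P where "P = avec \<bullet> (B *v x)"
  define q where "q = r' * (avec \<bullet> (B *v y))"
  have fr: "f r' = P + q" "f (-r') = P - q" by (auto simp: f_def P_def q_def)
  have pq: "\<bar>P + q\<bar> \<le> 2 * \<bar>P\<bar>"
  proof -
    have "(P + q) * (P - q) > 0" using sgn fr by simp
    hence "q^2 < P^2" by (simp add: algebra_simps power2_eq_square)
    hence "\<bar>q\<bar> < \<bar>P\<bar>" using abs_le_square_iff[of P q] by linarith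
    thus ?thesis by linarith
  qed
  have "delta * norm (B *v (x + r' *\<^sub>R y)) \<le> \<bar>P + q\<bar>"
    using delta_S[of "B *v (x + r' *\<^sub>R y)"] B seg[of r'] r'pos fB[of r'] fr by auto
  moreover have "norm (B *v (x + r' *\<^sub>R y)) \<ge> r' * norm (B *v y) - norm (B *v x)"
  proof -
    have "B *v (x + r' *\<^sub>R y) = B *v x + r' *\<^sub>R (B *v y)"
      by (simp add: matrix_vector_right_distrib matrix_vector_mult_scaleR)
    moreover have "norm (r' *\<^sub>R (B *v y)) \<le> norm (B *v x + r' *\<^sub>R (B *v y)) + norm (B *v x)"
      using norm_triangle_ineq4[of "B *v x + r' *\<^sub>R (B *v y)" "B *v x"] by simp
    ultimately show ?thesis using r'pos by simp
  qed
  moreover have "\<bar>P\<bar> \<le> norm avec * norm (B *v x)" unfolding P_def by (rule Cauchy_Schwarz_ineq2)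
  ultimately have "delta * (r' * norm (B *v y) - norm (B *v x)) \<le> 2 * (norm avec * norm (B *v x))"
  proof -
    assume a1: "delta * norm (B *v (x + r' *\<^sub>R y)) \<le> \<bar>P + q\<bar>"
      and a2: "r' * norm (B *v y) - norm (B *v x) \<le> norm (B *v (x + r' *\<^sub>R y))"
      and a3: "\<bar>P\<bar> \<le> norm avec * norm (B *v x)"
    have "delta * (r' * norm (B *v y) - norm (B *v x)) \<le> delta * norm (B *v (x + r' *\<^sub>R y))"
      using a2 delta(1) by (intro mult_left_mono) auto
    thus ?thesis using a1 a3 pq by linarith
  qed
  thus ?thesis unfolding r'_def by (simp add: algebra_simps)
qed

definition c1 where "c1 = (2 * norm avec + delta) / (delta * (rr / 2))"

lemma c1_pos: "c1 > 0" unfolding c1_def using delta(1) rr(1) by (auto intro!: divide_pos_pos add_nonneg_pos)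

lemma key_op:
  assumes B: "\<forall>w\<in>S. B *v w \<in> S" and x: "x \<in> K'"
  shows "opnorm B \<le> c1 * norm (B *v x)"
proof (rule opnorm_le)
  fix y :: "real^'d"
  have dr: "delta * (rr / 2) > 0" using delta(1) rr(1) by auto
  show "norm (B *v y) \<le> c1 * norm (B *v x) * norm y"
  proof (cases "y = 0")
    case True thus ?thesis by simp
  next
    case False
    define y' where "y' = (1 / norm y) *\<^sub>R y"
    have "norm y' = 1" using False y'_def by simp
    from key_vec[OF B x this]
    have "norm (B *v y') \<le> c1 * norm (B *v x)"
      unfolding c1_def using dr by (simp add: field_simps)
    moreover have "norm (B *v y') = norm (B *v y) / norm y"
      using False by (simp add: y'_def matrix_vector_mult_scaleR)
    ultimately show ?thesis using False by (simp add: field_simps)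
  qed
qed

lemma word_op:
  assumes "set w \<subseteq> {..<N}" "x \<in> K'"
  shows "opnorm (word_mat A w) \<le> c1 * norm (word_mat A w *v x)"
  using key_op word_S assms by blast

lemma x0_ex: "\<exists>x0. x0 \<in> K'"
proof -
  obtain l where l: "l \<in> M" using M_ne by auto
  have "l \<in> proj_space" using openin_subset[OF M_open] topspace_proj l by auto
  then obtain w where w: "w \<noteq> 0" "l = proj_line w" unfolding proj_space_def by auto
  hence "w \<in> S" using l S_def by auto
  thus ?thesis using S_to_K'[of w 0] N1 by auto
qed

lemma mu_ex: "\<exists>\<mu>>0. \<forall>j<N. \<forall>z. \<mu> * norm z \<le> norm (A j *v z)"
proof -
  have "\<forall>j<N. \<exists>\<mu>. \<mu> > 0 \<and> (\<forall>z. \<mu> * norm z \<le> norm (A j *v z))"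
  proof (intro allI impI)
    fix j assume j: "j < N"
    obtain B where B: "B ** A j = mat 1" using inv j unfolding invertible_def by auto
    have "norm z \<le> (opnorm B + 1) * norm (A j *v z)" for z
    proof -
      have "norm z = norm (B *v (A j *v z))" using B by (simp add: matrix_vector_mul_assoc matrix_vector_mul_lid)
      also have "\<dots> \<le> opnorm B * norm (A j *v z)" by (rule opnorm_mul)
      also have "\<dots> \<le> (opnorm B + 1) * norm (A j *v z)" by (simp add: algebra_simps)
      finally show ?thesis .
    qed
    moreover have "opnorm B + 1 > 0" using opnorm_nonneg[of B] by simp
    ultimately show "\<exists>\<mu>. \<mu> > 0 \<and> (\<forall>z. \<mu> * norm z \<le> norm (A j *v z))"
      by (intro exI[of _ "1 / (opnorm B + 1)"]) (auto simp: field_simps)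
  qed
  then obtain g where g: "\<forall>j<N. g j > 0 \<and> (\<forall>z. g j * norm z \<le> norm (A j *v z))" by metis
  define mu where "mu = Min (g ` {..<N})"
  have ne: "{..<N} \<noteq> {}"
  proof
    assume "{..<N} = {}" hence "(0::nat) \<notin> {..<N}" by simp
    thus False using N1 by simp
  qed
  have "mu > 0" unfolding mu_def using g ne by (subst Min_gr_iff) auto
  moreover have "\<forall>j<N. \<forall>z. mu * norm z \<le> norm (A j *v z)"
  proof (intro allI impI)
    fix j and z :: "real^'d" assume j: "j < N"
    have "mu \<le> g j" unfolding mu_def using j by auto
    hence "mu * norm z \<le> g j * norm z" by (simp add: mult_right_mono)
    moreover have "g j * norm z \<le> norm (A j *v z)" using g j by blast
    ultimately show "mu * norm z \<le> norm (A j *v z)" by linarith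
  qed
  ultimately show ?thesis by blast
qed

lemma QM_gen: "\<exists>Q>0. \<forall>u a w. set u \<subseteq> {..<N} \<longrightarrow> a < N \<longrightarrow> set w \<subseteq> {..<N} \<longrightarrow>
   opnorm (word_mat A u) * opnorm (word_mat A w) \<le> Q * opnorm (word_mat A (u @ a # w))"
proof -
  obtain x0 where x0: "x0 \<in> K'" using x0_ex by auto
  obtain mu where mu: "mu > 0" "\<forall>j<N. \<forall>z. mu * norm z \<le> norm (A j *v z)" using mu_ex by auto
  have "opnorm (word_mat A u) * opnorm (word_mat A w) \<le> (c1 * c1 / mu) * opnorm (word_mat A (u @ a # w))"
    if u: "set u \<subseteq> {..<N}" and a: "a < N" and w: "set w \<subseteq> {..<N}" for u a w
  proof -
    define z where "z = word_mat A w *v x0"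
    have zS: "z \<in> S" unfolding z_def using word_S[OF w] K'_S x0 by auto
    hence z0: "z \<noteq> 0" unfolding S_def by auto
    have az0: "A a *v z \<noteq> 0" using A_nz[OF a z0] .
    define x1 where "x1 = (1 / norm (A a *v z)) *\<^sub>R (A a *v z)"
    have x1: "x1 \<in> K'" unfolding x1_def using S_to_K'[OF zS a] .
    have h1: "opnorm (word_mat A w) \<le> c1 * norm z" using word_op[OF w x0] z_def by simp
    have h2: "opnorm (word_mat A u) \<le> c1 * norm (word_mat A u *v x1)" using word_op[OF u x1] .
    have h3: "norm (word_mat A u *v x1) = norm (word_mat A (u @ a # w) *v x0) / norm (A a *v z)"
      using az0 by (simp add: x1_def matrix_vector_mult_scaleR word_mat_append z_def matrix_vector_mul_assoc)
    have h4: "norm (word_mat A (u @ a # w) *v x0) \<le> opnorm (word_mat A (u @ a # w))"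
      using opnorm_mul[of "word_mat A (u @ a # w)" x0] K'_norm[OF x0] by simp
    have h5: "mu * norm z \<le> norm (A a *v z)" using mu a by auto
    have nz: "norm (A a *v z) > 0" using az0 by simp
    have "opnorm (word_mat A u) * (mu * norm z) \<le> c1 * norm (word_mat A (u @ a # w) *v x0) / norm (A a *v z) * norm (A a *v z)"
      using h2 h3 h5 opnorm_nonneg[of "word_mat A u"] mu(1) c1_pos
      by (intro mult_mono) (auto)
    hence "opnorm (word_mat A u) * (mu * norm z) \<le> c1 * opnorm (word_mat A (u @ a # w))"
      using nz h4 c1_pos by (smt (verit) mult_left_mono nonzero_eq_divide_eq)
    hence "opnorm (word_mat A u) * norm z \<le> c1 / mu * opnorm (word_mat A (u @ a # w))"
      using mu(1) by (simp add: field_simps)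
    moreover have "opnorm (word_mat A u) * opnorm (word_mat A w) \<le> opnorm (word_mat A u) * (c1 * norm z)"
      using h1 opnorm_nonneg[of "word_mat A u"] by (rule mult_left_mono)
    ultimately have "opnorm (word_mat A u) * opnorm (word_mat A w) \<le> c1 * (c1 / mu * opnorm (word_mat A (u @ a # w)))"
      using c1_pos by (smt (verit) mult.left_commute mult_left_mono)
    thus ?thesis by (simp add: field_simps)
  qed
  moreover have "c1 * c1 / mu > 0" using c1_pos mu(1) by auto
  ultimately show ?thesis by blast
qed

end


context zip begin

lemma gam_refl: "j \<le> N \<Longrightarrow> gam (\<lambda>j. lam (N - 1 - j)) j = 1 - gam lam (N - j)"
proof (induction j)
  case 0 thus ?case using gam_N by simp
next
  case (Suc j)
  hence j: "j < N" by simp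
  have IH: "gam (\<lambda>j. lam (N - 1 - j)) j = 1 - gam lam (N - j)" using Suc.IH j by simp
  have e: "N - j = Suc (N - Suc j)" using j by simp
  have e2: "N - 1 - j = N - Suc j" by simp
  have s1: "gam (\<lambda>j. lam (N - 1 - j)) (Suc j) = gam (\<lambda>j. lam (N - 1 - j)) j + lam (N - 1 - j)"
    by (rule gam_Suc)
  have s2: "gam lam (N - j) = gam lam (N - Suc j) + lam (N - Suc j)" unfolding e by (rule gam_Suc)
  show ?case using s1 s2 IH unfolding e2 by linarith
qed

lemma refl_zip: "zip N (\<lambda>j. A (N - 1 - j)) (\<lambda>j. t (N - 1 - j)) (\<lambda>j. lam (N - 1 - j)) (\<lambda>s. v (1 - s)) D"
proof
  show "N \<ge> 2" by (rule N2)
  show "\<forall>i<N. lam (N - 1 - i) > 0" using lam_pos by auto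
  show "(\<Sum>i<N. lam (N - 1 - i)) = 1" using gam_refl[of N] by (simp add: gam_def)
  show "\<forall>s\<in>{0..1}. \<forall>s'\<in>{0..1}. norm (v (1 - s) - v (1 - s')) \<le> D" using Dbound by auto
  show "\<forall>j<N. opnorm (A (N - 1 - j)) \<le> 1" using normA by auto
  show "\<forall>i<N. \<forall>x\<in>(\<lambda>y. lam (N - 1 - i) * y + gam (\<lambda>j. lam (N - 1 - j)) i) ` {0..1}.
          v (1 - x) = A (N - 1 - i) *v v (1 - (x - gam (\<lambda>j. lam (N - 1 - j)) i) / lam (N - 1 - i)) + t (N - 1 - i)"
  proof (intro allI impI ballI)
    fix i x assume i: "i < N" and "x \<in> (\<lambda>y. lam (N - 1 - i) * y + gam (\<lambda>j. lam (N - 1 - j)) i) ` {0..1}"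
    then obtain y where y: "y \<in> {0..1}" and x: "x = lam (N - 1 - i) * y + gam (\<lambda>j. lam (N - 1 - j)) i" by auto
    define k where "k = N - 1 - i"
    have k: "k < N" "N - i = Suc k" using i k_def by auto
    have lk: "lam k > 0" using lam_pos k by auto
    have g: "gam (\<lambda>j. lam (N - 1 - j)) i = 1 - gam lam k - lam k"
      using gam_refl[of i] i k by (simp add: gam_Suc)
    have "1 - x = lam k * (1 - y) + gam lam k" using x g k_def by (simp add: algebra_simps)
    moreover have "(x - gam (\<lambda>j. lam (N - 1 - j)) i) / lam (N - 1 - i) = y"
      using x lk k_def by simp
    moreover have "1 - y \<in> {0..1}" using y by auto
    ultimately show "v (1 - x) = A (N - 1 - i) *v v (1 - (x - gam (\<lambda>j. lam (N - 1 - j)) i) / lam (N - 1 - i)) + t (N - 1 - i)"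
      using v_step[OF k(1), of "1 - y"] k_def by simp
  qed
qed

lemma gw_refl: "set w \<subseteq> {..<N} \<Longrightarrow>
   gw (\<lambda>j. lam (N - 1 - j)) (map (\<lambda>j. N - 1 - j) w) s = 1 - gw lam w (1 - s)"
proof (induction w)
  case (Cons j w)
  hence j: "j < N" and w: "set w \<subseteq> {..<N}" by auto
  have e1: "N - 1 - (N - 1 - j) = j" using j by simp
  have "gam (\<lambda>j. lam (N - 1 - j)) (N - 1 - j) = 1 - gam lam (Suc j)"
    using gam_refl[of "N - 1 - j"] j by (simp add: Suc_diff_Suc)
  hence g: "gam (\<lambda>j. lam (N - 1 - j)) (N - 1 - j) = 1 - gam lam j - lam j" by (simp add: gam_Suc)
  have "gw (\<lambda>j. lam (N - 1 - j)) (map (\<lambda>j. N - 1 - j) (j # w)) s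
     = lam j * gw (\<lambda>j. lam (N - 1 - j)) (map (\<lambda>j. N - 1 - j) w) s + gam (\<lambda>j. lam (N - 1 - j)) (N - 1 - j)"
    using e1 by simp
  also have "\<dots> = lam j * (1 - gw lam w (1 - s)) + (1 - gam lam j - lam j)" using Cons.IH[OF w] g by simp
  also have "\<dots> = 1 - gw lam (j # w) (1 - s)" by (simp add: algebra_simps)
  finally show ?case .
qed simp

lemma lamw_refl: "set w \<subseteq> {..<N} \<Longrightarrow> lamw (\<lambda>j. lam (N - 1 - j)) (map (\<lambda>j. N - 1 - j) w) = lamw lam w"
  by (induction w) auto

lemma word_refl: "set w \<subseteq> {..<N} \<Longrightarrow> word_mat (\<lambda>j. A (N - 1 - j)) (map (\<lambda>j. N - 1 - j) w) = word_mat A w"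
  by (induction w) auto

lemma word_refl': "word_mat (\<lambda>j. A (N - 1 - j)) w = word_mat A (map (\<lambda>j. N - 1 - j) w)"
  by (induction w) auto

definition cterm where "cterm ii n = (\<Prod>k<n. lam (ii k)) * gam lam (ii n)"

lemma lamw_prefix: "lamw lam (prefix_word ii n) = (\<Prod>k<n. lam (ii k))"
  by (induction n) (auto simp: prefix_word_Suc lamw_append)

lemma psum: "(\<Sum>n<m. cterm ii n) = gw lam (prefix_word ii m) 0"
proof (induction m)
  case (Suc m)
  have "gw lam (prefix_word ii (Suc m)) 0 = gw lam (prefix_word ii m) (gam lam (ii m))"
    by (simp add: prefix_word_Suc gw_append)
  also have "\<dots> = gw lam (prefix_word ii m) 0 + lamw lam (prefix_word ii m) * gam lam (ii m)"
    by (rule gw_affine)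
  finally show ?case using Suc by (simp add: cterm_def lamw_prefix)
qed simp

lemma coding_in:
  assumes ii: "\<forall>n. ii n < N"
  shows "coding lam ii \<in> {gw lam (prefix_word ii n) 0 .. gw lam (prefix_word ii n) 1}"
proof -
  have cdef: "coding lam ii = suminf (cterm ii)" unfolding coding_def cterm_def by simp
  have nn: "cterm ii n \<ge> 0" for n
    unfolding cterm_def using ii lam_pos gam_nonneg[of "ii n"]
    by (intro mult_nonneg_nonneg prod_nonneg) (auto intro: less_imp_le)
  have pre: "set (prefix_word ii m) \<subseteq> {..<N}" for m using prefix_set ii by auto
  have ps1: "(\<Sum>n<m. cterm ii n) \<le> 1" for m using psum gw_range[OF pre, of 0] by auto
  have sm: "summable (cterm ii)" using nn ps1 by (intro summableI_nonneg_bounded) auto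
  have lo: "gw lam (prefix_word ii n) 0 \<le> coding lam ii"
    using sum_le_suminf[OF sm, of "{..<n}"] nn psum cdef by auto
  have up1: "(\<Sum>k<m. cterm ii k) \<le> gw lam (prefix_word ii n) 1" if "n \<le> m" for m
  proof -
    have "prefix_word ii m = prefix_word ii n @ map ii [n..<m]"
      using prefix_word_add[of ii n "m - n"] that by simp
    hence "gw lam (prefix_word ii m) 0 = gw lam (prefix_word ii n) (gw lam (map ii [n..<m]) 0)"
      by (simp add: gw_append)
    moreover have "gw lam (map ii [n..<m]) 0 \<le> 1" using gw_range[of "map ii [n..<m]" 0] ii by auto
    moreover have "lamw lam (prefix_word ii n) \<ge> 0" using lamw_pos[OF pre] by (simp add: less_imp_le)
    ultimately have "gw lam (prefix_word ii m) 0 \<le> gw lam (prefix_word ii n) 1"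
    proof -
      assume a1: "gw lam (prefix_word ii m) 0 = gw lam (prefix_word ii n) (gw lam (map ii [n..<m]) 0)"
        and a2: "gw lam (map ii [n..<m]) 0 \<le> 1" and a3: "0 \<le> lamw lam (prefix_word ii n)"
      have "lamw lam (prefix_word ii n) * gw lam (map ii [n..<m]) 0 \<le> lamw lam (prefix_word ii n) * 1"
        using a2 a3 by (rule mult_left_mono)
      thus ?thesis using a1 gw_affine[of lam "prefix_word ii n" "gw lam (map ii [n..<m]) 0"]
        gw_affine[of lam "prefix_word ii n" 1] by simp
    qed
    thus ?thesis using psum by simp
  qed
  have up: "(\<Sum>k<m. cterm ii k) \<le> gw lam (prefix_word ii n) 1" for m
  proof -
    have "(\<Sum>k<m. cterm ii k) \<le> (\<Sum>k<max m n. cterm ii k)"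
      using nn by (intro sum_mono2) auto
    thus ?thesis using up1[of "max m n"] by simp
  qed
  have "coding lam ii \<le> gw lam (prefix_word ii n) 1" using suminf_le_const[OF sm up] cdef by simp
  thus ?thesis using lo by simp
qed

end


lemma ratio_bound:
  fixes f g :: "nat \<Rightarrow> real"
  assumes "(\<lambda>m. f m / g m) \<longlonglongrightarrow> L" "\<forall>m. g m > 0"
  shows "\<exists>K. \<forall>m. f m \<le> K * g m"
proof -
  obtain K where K: "\<forall>m. norm (f m / g m) \<le> K"
    using convergent_imp_Bseq[of "\<lambda>m. f m / g m"] assms(1) unfolding Bseq_def convergent_def by auto
  have "f m \<le> K * g m" for m
  proof -
    have "f m / g m \<le> norm (f m / g m)" unfolding real_norm_def by (rule abs_ge_self)
    hence "f m / g m \<le> K" using K[rule_format, of m] by linarith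
    thus ?thesis using assms(2) by (simp add: field_simps)
  qed
  thus ?thesis by blast
qed

lemma word_nz:
  fixes A :: "nat \<Rightarrow> real^'d^'d"
  assumes "\<forall>i<N. invertible (A i)" "set w \<subseteq> {..<N}" "z \<noteq> 0"
  shows "word_mat A w *v z \<noteq> 0"
  using assms(2)
proof (induction w)
  case Nil thus ?case using assms(3) by (simp add: matrix_vector_mul_lid)
next
  case (Cons j w)
  hence j: "j < N" and nz: "word_mat A w *v z \<noteq> 0" by auto
  obtain B where "B ** A j = mat 1" using assms(1) j unfolding invertible_def by auto
  hence "B *v (A j *v (word_mat A w *v z)) = word_mat A w *v z"
    using matrix_vector_mul_assoc[of B "A j" "word_mat A w *v z"] by (simp add: matrix_vector_mul_lid)
  hence "A j *v (word_mat A w *v z) \<noteq> 0" using nz by auto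
  thus ?case by (simp add: matrix_vector_mul_assoc)
qed

lemma opnorm_pos:
  fixes A :: "nat \<Rightarrow> real^'d^'d"
  assumes "\<forall>i<N. invertible (A i)" "set w \<subseteq> {..<N}"
  shows "opnorm (word_mat A w) > 0"
proof -
  obtain i :: 'd where True by auto
  define z :: "real^'d" where "z = axis i 1"
  have z: "z \<noteq> 0" "norm z = 1" by (auto simp: z_def axis_eq_0_iff)
  have "0 < norm (word_mat A w *v z)" using word_nz[OF assms z(1)] by simp
  also have "\<dots> \<le> opnorm (word_mat A w) * norm z" by (rule opnorm_mul)
  finally show ?thesis using z by simp
qed



theorem lemma3p5:
  fixes N :: nat
    and A :: "nat \<Rightarrow> real^'d^'d" and t :: "nat \<Rightarrow> real^'d"
    and z :: "nat \<Rightarrow> real^'d"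
    and \<Gamma> :: "(real^'d) set"
    and lam :: "nat \<Rightarrow> real"
    and v :: "real \<Rightarrow> real^'d"
    and M :: "(real^'d) set set"
    and ii :: "nat \<Rightarrow> nat"
  assumes N_pos: "N \<ge> 1"
    and inv: "\<forall>i<N. invertible (A i)"
    and contr: "\<forall>i<N. contraction (\<lambda>x. A i *v x + t i)"
    and vert0: "\<forall>i<N. A i *v z 0 + t i = z i"
    and vertN: "\<forall>i<N. A i *v z N + t i = z (Suc i)"
    and attr: "compact \<Gamma>" "\<Gamma> \<noteq> {}" "\<Gamma> = (\<Union>i<N. (\<lambda>x. A i *v x + t i) ` \<Gamma>)"
    and lam_pos: "\<forall>i<N. lam i > 0"
    and lam_sum: "(\<Sum>i<N. lam i) = 1"
    and v_cont: "continuous_on {0..1} v"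
    and v_eq: "\<forall>i<N. \<forall>x \<in> (\<lambda>y. lam i * y + gam lam i) ` {0..1}.
                  v x = A i *v v ((x - gam lam i) / lam i) + t i"
    and dom: "dominated_splitting_index1 N A M"
    and nondeg: "\<exists>U. bounded U \<and> open U \<and>
                   (\<forall>i<N. \<forall>j<N. i \<noteq> j \<longrightarrow>
                      (\<lambda>x. A i *v x + t i) ` U \<inter> (\<lambda>x. A j *v x + t j) ` U = {}) \<and>
                   \<Gamma> \<inter> U \<noteq> {}"
    and nondeg_dir: "z N \<noteq> z 0"
    and nondeg_M: "proj_line (z N - z 0) \<notin>
                     (\<Inter>k. \<Inter>w\<in>words N k. {l \<in> proj_space. proj_act (word_mat A w) l \<notin> M})"
    and sym_lam: "lam 0 = lam (N - 1)"
    and sym_A: "(\<lambda>k. opnorm (word_mat A (replicate k 0)) / opnorm (word_mat A (replicate k (N - 1))))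
                  \<longlonglongrightarrow> 1"
    and ii_Sigma: "\<forall>n. ii n < N"
  shows "holder_exp v (coding lam ii) \<ge>
           liminf (\<lambda>n. ereal (ln (opnorm (word_mat A (prefix_word ii n)))
                              / ln (\<Prod>k<n. lam (ii k))))"
proof -
  have N2: "N \<ge> 2"
  proof (rule ccontr)
    assume "\<not> N \<ge> 2"
    hence N1: "N = 1" using N_pos by auto
    obtain c where c: "c < 1" "\<forall>x y. dist (A 0 *v x + t 0) (A 0 *v y + t 0) \<le> c * dist x y"
      using contr N1 unfolding contraction_def by auto
    have f0: "A 0 *v z 0 + t 0 = z 0" using vert0 N1 by auto
    have f1: "A 0 *v z N + t 0 = z N" using vertN N1 by auto
    have "dist (z 0) (z N) \<le> c * dist (z 0) (z N)" using c(2) f0 f1 by metis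
    hence "dist (z 0) (z N) \<le> 0" using c(1) by (smt (verit) mult_le_cancel_right1 zero_le_dist)
    thus False using nondeg_dir by simp
  qed
  have normA: "\<forall>j<N. opnorm (A j) \<le> 1"
  proof (intro allI impI)
    fix j assume j: "j < N"
    obtain c where c: "c < 1" "\<forall>x y. dist (A j *v x + t j) (A j *v y + t j) \<le> c * dist x y"
      using contr j unfolding contraction_def by auto
    show "opnorm (A j) \<le> 1"
    proof (rule opnorm_le)
      fix y :: "real^'d"
      have "norm (A j *v y) = dist (A j *v y + t j) (A j *v 0 + t j)" by (simp add: dist_norm)
      also have "\<dots> \<le> c * dist y 0" using c(2) by blast
      also have "\<dots> \<le> 1 * norm y" using c(1) mult_right_mono[of c 1 "norm y"] by simp
      finally show "norm (A j *v y) \<le> 1 * norm y" .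
    qed
  qed
  obtain B where B: "\<forall>s\<in>{0..1}. norm (v s) \<le> B"
  proof -
    have "compact (v ` {0..1})" by (rule compact_continuous_image[OF v_cont compact_Icc])
    hence "bounded (v ` {0..1})" by (rule compact_imp_bounded)
    then obtain B where "\<forall>y\<in>v ` {0..1}. norm y \<le> B" unfolding bounded_iff by auto
    thus ?thesis using that by auto
  qed
  define D where "D = 2 * B"
  have Dbound: "\<forall>s\<in>{0..1}. \<forall>s'\<in>{0..1}. norm (v s - v s') \<le> D"
  proof (intro ballI)
    fix s s' :: real assume "s \<in> {0..1}" "s' \<in> {0..1}"
    hence "norm (v s) \<le> B" "norm (v s') \<le> B" using B by auto
    thus "norm (v s - v s') \<le> D" unfolding D_def using norm_triangle_ineq4[of "v s" "v s'"] by linarith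
  qed
  have Z: "zip N A t lam v D"
    using N2 lam_pos lam_sum v_eq Dbound normA by unfold_locales auto
  interpret zip N A t lam v D by (rule Z)
  have ZR: "zip N (\<lambda>j. A (N - 1 - j)) (\<lambda>j. t (N - 1 - j)) (\<lambda>j. lam (N - 1 - j)) (\<lambda>s. v (1 - s)) D"
    by (rule refl_zip)
  have DS: "domsp N A M" using N_pos inv dom by unfold_locales auto
  obtain Q0 where Q0: "Q0 > 0" "\<forall>u a w. set u \<subseteq> {..<N} \<longrightarrow> a < N \<longrightarrow> set w \<subseteq> {..<N} \<longrightarrow>
     opnorm (word_mat A u) * opnorm (word_mat A w) \<le> Q0 * opnorm (word_mat A (u @ a # w))"
    using domsp.QM_gen[OF DS] by blast
  have set0: "set (replicate m (0::nat)) \<subseteq> {..<N}" for m using N2 by auto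
  have setN: "set (replicate m (N - 1)) \<subseteq> {..<N}" for m using N2 by auto
  have posN: "opnorm (word_mat A (replicate m (N - 1))) > 0" for m using opnorm_pos[OF inv setN] .
  have pos0: "opnorm (word_mat A (replicate m 0)) > 0" for m using opnorm_pos[OF inv set0] .
  obtain K1 where K1: "\<forall>m. opnorm (word_mat A (replicate m 0)) \<le> K1 * opnorm (word_mat A (replicate m (N - 1)))"
    using ratio_bound[OF sym_A] posN by blast
  have symA': "(\<lambda>k. opnorm (word_mat A (replicate k (N - 1))) / opnorm (word_mat A (replicate k 0))) \<longlonglongrightarrow> 1"
  proof -
    have "(\<lambda>k. inverse (opnorm (word_mat A (replicate k 0)) / opnorm (word_mat A (replicate k (N - 1))))) \<longlonglongrightarrow> inverse 1"
      by (rule tendsto_inverse[OF sym_A]) simp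
    thus ?thesis by (simp add: inverse_divide)
  qed
  obtain K2 where K2: "\<forall>m. opnorm (word_mat A (replicate m (N - 1))) \<le> K2 * opnorm (word_mat A (replicate m 0))"
    using ratio_bound[OF symA'] pos0 by blast
  have K1nn: "K1 \<ge> 0" using K1[rule_format, of 0] pos0[of 0] posN[of 0]
    by (smt (verit) mult_nonpos_nonneg)
  have K2nn: "K2 \<ge> 0" using K2[rule_format, of 0] pos0[of 0] posN[of 0]
    by (smt (verit) mult_nonpos_nonneg)
  define rf where "rf = (\<lambda>j::nat. N - 1 - j)"
  have QM1: "\<forall>u a m. set u \<subseteq> {..<N} \<longrightarrow> a < N \<longrightarrow>
      opnorm (word_mat A u) * opnorm (word_mat A (replicate m 0))
        \<le> (K1 * Q0) * opnorm (word_mat A (u @ a # replicate m (N - 1)))"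
  proof (intro allI impI)
    fix u a m assume u: "set u \<subseteq> {..<N}" and a: "a < N"
    have "opnorm (word_mat A u) * opnorm (word_mat A (replicate m 0))
        \<le> opnorm (word_mat A u) * (K1 * opnorm (word_mat A (replicate m (N - 1))))"
      using K1 opnorm_nonneg[of "word_mat A u"] by (intro mult_left_mono) auto
    also have "\<dots> = K1 * (opnorm (word_mat A u) * opnorm (word_mat A (replicate m (N - 1))))" by simp
    also have "\<dots> \<le> K1 * (Q0 * opnorm (word_mat A (u @ a # replicate m (N - 1))))"
      using Q0(2) u a setN K1nn by (intro mult_left_mono) auto
    finally show "opnorm (word_mat A u) * opnorm (word_mat A (replicate m 0))
        \<le> (K1 * Q0) * opnorm (word_mat A (u @ a # replicate m (N - 1)))" by simp
  qed
  have QM2: "\<forall>u a m. set u \<subseteq> {..<N} \<longrightarrow> a < N \<longrightarrow>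
      opnorm (word_mat (\<lambda>j. A (N - 1 - j)) u) * opnorm (word_mat (\<lambda>j. A (N - 1 - j)) (replicate m 0))
        \<le> (K2 * Q0) * opnorm (word_mat (\<lambda>j. A (N - 1 - j)) (u @ a # replicate m (N - 1)))"
  proof (intro allI impI)
    fix u a m assume u: "set u \<subseteq> {..<N}" and a: "a < N"
    have u': "set (map rf u) \<subseteq> {..<N}" using u N2 by (auto simp: rf_def)
    have a': "rf a < N" using N2 by (simp add: rf_def)
    have e1: "word_mat (\<lambda>j. A (N - 1 - j)) (replicate m 0) = word_mat A (replicate m (N - 1))"
      unfolding word_refl' by simp
    have e2: "word_mat (\<lambda>j. A (N - 1 - j)) (u @ a # replicate m (N - 1)) = word_mat A (map rf u @ rf a # replicate m 0)"
      using N2 unfolding word_refl' rf_def by simp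
    have e3: "word_mat (\<lambda>j. A (N - 1 - j)) u = word_mat A (map rf u)" unfolding word_refl' rf_def ..
    have "opnorm (word_mat A (map rf u)) * opnorm (word_mat A (replicate m (N - 1)))
        \<le> opnorm (word_mat A (map rf u)) * (K2 * opnorm (word_mat A (replicate m 0)))"
      using K2 opnorm_nonneg[of "word_mat A (map rf u)"] by (intro mult_left_mono) auto
    also have "\<dots> = K2 * (opnorm (word_mat A (map rf u)) * opnorm (word_mat A (replicate m 0)))" by simp
    also have "\<dots> \<le> K2 * (Q0 * opnorm (word_mat A (map rf u @ rf a # replicate m 0)))"
      using Q0(2) u' a' set0 K2nn by (intro mult_left_mono) auto
    finally show "opnorm (word_mat (\<lambda>j. A (N - 1 - j)) u) * opnorm (word_mat (\<lambda>j. A (N - 1 - j)) (replicate m 0))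
        \<le> (K2 * Q0) * opnorm (word_mat (\<lambda>j. A (N - 1 - j)) (u @ a # replicate m (N - 1)))"
      using e1 e2 e3 by simp
  qed
  define x where "x = coding lam ii"
  have x_in: "\<forall>n. x \<in> {gw lam (prefix_word ii n) 0 .. gw lam (prefix_word ii n) 1}"
    using coding_in[OF ii_Sigma] x_def by auto
  have x01: "x \<in> {0..1}" using x_in[rule_format, of 0] by simp
  have pre: "set (prefix_word ii n) \<subseteq> {..<N}" for n using prefix_set ii_Sigma by auto
  define r where "r = (\<lambda>n. ereal (ln (opnorm (word_mat A (prefix_word ii n))) / ln (\<Prod>k<n. lam (ii k))))"
  have hold: "\<exists>K>0. \<forall>y\<in>{0..1}. y \<noteq> x \<longrightarrow> norm (v y - v x) \<le> K * \<bar>y - x\<bar> powr beta"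
    if beta: "beta > 0" "ereal beta < liminf r" for beta
  proof -
    have "eventually (\<lambda>n. ereal beta < r n) sequentially"
      using beta(2) le_Liminf_iff[of "liminf r" sequentially r] by auto
    then obtain n0 where n0: "\<forall>n\<ge>n0. ereal beta < r n" unfolding eventually_sequentially by auto
    define n1 where "n1 = Suc n0"
    let ?a = "\<lambda>n. opnorm (word_mat A (prefix_word ii n))"
    let ?l = "\<lambda>n. lamw lam (prefix_word ii n)"
    have lpos: "?l n > 0" for n using lamw_pos[OF pre] .
    have big: "?a n \<le> 1 * ?l n powr beta" if nn: "n \<ge> n1" for n
    proof -
      have "?l n \<le> rho ^ n" using lamw_le_rho[OF pre, of n] by (simp add: prefix_word_def)
      also have "\<dots> < 1"
      proof -
        have rp: "rho > 0" using lam_le_rho[of 0] lam_pos N2 by force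
        obtain k where "n = Suc k" using nn n1_def by (cases n) auto
        thus ?thesis using power_Suc_less_one[OF rp rho_lt1] by simp
      qed
      finally have l1: "?l n < 1" .
      have L: "ln (?l n) < 0" using l1 lpos[of n] by simp
      have "beta < ln (?a n) / ln (?l n)"
        using n0[rule_format, of n] nn n1_def by (simp add: r_def lamw_prefix)
      hence lt: "ln (?a n) < beta * ln (?l n)" using L by (simp add: neg_less_divide_eq mult.commute)
      show ?thesis
      proof (cases "?a n = 0")
        case True thus ?thesis using lpos[of n] by simp
      next
        case False
        hence "?a n > 0" using opnorm_nonneg[of "word_mat A (prefix_word ii n)"] by simp
        hence "?a n = exp (ln (?a n))" by simp
        also have "\<dots> \<le> exp (beta * ln (?l n))" using lt by simp
        also have "\<dots> = ?l n powr beta" using lpos[of n] by (simp add: powr_def)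
        finally show ?thesis by simp
      qed
    qed
    define C where "C = 1 + (\<Sum>n<n1. ?a n / ?l n powr beta)"
    have Cb: "\<forall>n. ?a n \<le> C * ?l n powr beta"
    proof
      fix n
      have trm: "?a n / ?l n powr beta \<ge> 0" for n
        using opnorm_nonneg[of "word_mat A (prefix_word ii n)"] lpos[of n] by (intro divide_nonneg_nonneg) auto
      have Cge1: "C \<ge> 1" unfolding C_def using trm by (simp add: sum_nonneg)
      show "?a n \<le> C * ?l n powr beta"
      proof (cases "n < n1")
        case True
        have "?a n / ?l n powr beta \<le> (\<Sum>n<n1. ?a n / ?l n powr beta)"
          using True trm by (intro member_le_sum) auto
        hence "?a n / ?l n powr beta \<le> C" unfolding C_def by simp
        thus ?thesis using lpos[of n] by (simp add: field_simps)
      next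
        case False
        hence "?a n \<le> 1 * ?l n powr beta" using big by simp
        also have "\<dots> \<le> C * ?l n powr beta" using Cge1 by (intro mult_right_mono) auto
        finally show ?thesis .
      qed
    qed
    have CR1: "core N A t lam v D ii x C beta (K1 * Q0)"
      by (intro core.intro core_axioms.intro Z QM1 sym_lam ii_Sigma beta(1) Cb x_in)
         (use K1nn Q0 in simp_all)
    obtain Ka where Ka: "\<forall>y. x < y \<and> y \<le> 1 \<longrightarrow> norm (v y - v x) \<le> Ka * (y - x) powr beta"
      using core.core_bound[OF CR1] by blast
    define ii' where "ii' = (\<lambda>n. N - 1 - ii n)"
    have pre': "prefix_word ii' n = map (\<lambda>j. N - 1 - j) (prefix_word ii n)" for n
      by (simp add: prefix_word_def ii'_def)
    have CR2: "core N (\<lambda>j. A (N - 1 - j)) (\<lambda>j. t (N - 1 - j)) (\<lambda>j. lam (N - 1 - j)) (\<lambda>s. v (1 - s)) D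
                  ii' (1 - x) C beta (K2 * Q0)"
    proof (intro core.intro core_axioms.intro ZR QM2)
      show "K2 * Q0 \<ge> 0" using K2nn Q0 by simp
      show "lam (N - 1 - 0) = lam (N - 1 - (N - 1))" using sym_lam by simp
      show "\<forall>n. ii' n < N" using N2 by (simp add: ii'_def)
      show "beta > 0" by (rule beta(1))
      show "\<forall>n. opnorm (word_mat (\<lambda>j. A (N - 1 - j)) (prefix_word ii' n))
               \<le> C * lamw (\<lambda>j. lam (N - 1 - j)) (prefix_word ii' n) powr beta"
        unfolding pre' word_refl[OF pre] lamw_refl[OF pre] using Cb by simp
      show "\<forall>n. 1 - x \<in> {gw (\<lambda>j. lam (N - 1 - j)) (prefix_word ii' n) 0 .. gw (\<lambda>j. lam (N - 1 - j)) (prefix_word ii' n) 1}"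
        unfolding pre' gw_refl[OF pre] using x_in by simp
    qed
    obtain Kb where Kb: "\<forall>y. 1 - x < y \<and> y \<le> 1 \<longrightarrow> norm (v (1 - y) - v (1 - (1 - x))) \<le> Kb * (y - (1 - x)) powr beta"
      using core.core_bound[OF CR2] by blast
    define K where "K = \<bar>Ka\<bar> + \<bar>Kb\<bar> + 1"
    have "norm (v y - v x) \<le> K * \<bar>y - x\<bar> powr beta" if y: "y \<in> {0..1}" "y \<noteq> x" for y
    proof (cases "x < y")
      case True
      hence "norm (v y - v x) \<le> Ka * (y - x) powr beta" using Ka y by auto
      also have "\<dots> = Ka * \<bar>y - x\<bar> powr beta" using True by simp
      also have "\<dots> \<le> K * \<bar>y - x\<bar> powr beta" unfolding K_def by (intro mult_right_mono) auto
      finally show ?thesis .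
    next
      case False
      hence yx: "y < x" using y by auto
      have "norm (v (1 - (1 - y)) - v (1 - (1 - x))) \<le> Kb * ((1 - y) - (1 - x)) powr beta"
        using Kb[rule_format, of "1 - y"] yx y by auto
      hence "norm (v y - v x) \<le> Kb * \<bar>y - x\<bar> powr beta" using yx by simp
      also have "\<dots> \<le> K * \<bar>y - x\<bar> powr beta" unfolding K_def by (intro mult_right_mono) auto
      finally show ?thesis .
    qed
    moreover have "K > 0" unfolding K_def by simp
    ultimately show ?thesis by blast
  qed
  have main: "liminf r \<le> holder_exp v x"
    unfolding holder_exp_def
  proof (rule le_Liminf_iff[THEN iffD2], intro allI impI)
    fix y :: ereal assume y: "y < liminf r"
    define f where "f = (\<lambda>z. if v z = v x then \<infinity> else ereal (ln (norm (v x - v z)) / ln \<bar>x - z\<bar>))"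
    have fneq: "f z \<noteq> - \<infinity>" for z unfolding f_def by auto
    have "eventually (\<lambda>z. y < f z) (at x within {0..1})"
    proof (cases y)
      case MInf
      thus ?thesis using fneq by (intro always_eventually) (auto simp: f_def)
    next
      case PInf
      thus ?thesis using y by simp
    next
      case (real g)
      show ?thesis
      proof (cases "g < 0")
        case True
        have cont: "(v \<longlongrightarrow> v x) (at x within {0..1})"
          using v_cont x01 unfolding continuous_on_def by auto
        have ev1: "eventually (\<lambda>z. dist (v z) (v x) < 1) (at x within {0..1})"
          using tendstoD[OF cont, of 1] by simp
        have ev2: "eventually (\<lambda>z. z \<noteq> x \<and> dist z x < 1) (at x within {0..1})"
          unfolding eventually_at by (intro exI[of _ 1]) auto
        show ?thesis
        proof (rule eventually_mono[OF eventually_conj[OF ev1 ev2]])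
          fix z assume z: "dist (v z) (v x) < 1 \<and> z \<noteq> x \<and> dist z x < 1"
          show "y < f z"
          proof (cases "v z = v x")
            case True thus ?thesis unfolding f_def using real by simp
          next
            case False
            have a1: "0 < norm (v x - v z)" "norm (v x - v z) < 1"
              using False z by (auto simp: dist_norm norm_minus_commute)
            have a2: "0 < \<bar>x - z\<bar>" "\<bar>x - z\<bar> < 1" using z by (auto simp: dist_real_def)
            have "ln (norm (v x - v z)) < 0" "ln \<bar>x - z\<bar> < 0" using a1 a2 by auto
            hence "ln (norm (v x - v z)) / ln \<bar>x - z\<bar> > 0" by (simp add: divide_neg_neg)
            thus ?thesis unfolding f_def using False real True by simp
          qed
        qed
      next
        case False
        obtain b where b: "ereal g < ereal b" "ereal b < liminf r"
          using ereal_dense2[of y "liminf r"] y real by auto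
        have gb: "g < b" "b > 0" using b(1) False by auto
        obtain K where K: "K > 0" "\<forall>y\<in>{0..1}. y \<noteq> x \<longrightarrow> norm (v y - v x) \<le> K * \<bar>y - x\<bar> powr b"
          using hold[OF gb(2) b(2)] by blast
        define K1 where "K1 = K + 1"
        have K1: "K1 > 1" using K(1) K1_def by simp
        define dd where "dd = min 1 (exp (- ln K1 / (b - g)))"
        have dd: "dd > 0" unfolding dd_def by simp
        have ev: "eventually (\<lambda>z. z \<in> {0..1} \<and> z \<noteq> x \<and> dist z x < dd) (at x within {0..1})"
          unfolding eventually_at using dd by (intro exI[of _ dd]) auto
        show ?thesis
        proof (rule eventually_mono[OF ev])
          fix z assume z: "z \<in> {0..1} \<and> z \<noteq> x \<and> dist z x < dd"
          show "y < f z"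
          proof (cases "v z = v x")
            case True thus ?thesis unfolding f_def using real by simp
          next
            case False
            define d where "d = norm (v x - v z)"
            define h where "h = \<bar>x - z\<bar>"
            have d0: "d > 0" using False by (simp add: d_def)
            have h0: "h > 0" "h < 1" "h < exp (- ln K1 / (b - g))"
              using z unfolding h_def dd_def by (auto simp: dist_real_def abs_minus_commute)
            have "d \<le> K * h powr b"
              using K(2) z unfolding d_def h_def by (auto simp: norm_minus_commute abs_minus_commute)
            also have "\<dots> \<le> K1 * h powr b" unfolding K1_def by (intro mult_right_mono) auto
            finally have dK: "d \<le> K1 * h powr b" .
            have "ln d \<le> ln (K1 * h powr b)" using dK d0 by simp
            also have "\<dots> = ln K1 + b * ln h" using K1 h0 by (simp add: ln_mult)
            finally have l1: "ln d \<le> ln K1 + b * ln h" .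
            have "ln h < - ln K1 / (b - g)"
              using h0 ln_less_cancel_iff[of h "exp (- ln K1 / (b - g))"] by simp
            hence "(b - g) * ln h < - ln K1" using gb by (simp add: field_simps)
            hence l2: "ln d < g * ln h" using l1 by (simp add: algebra_simps)
            have lh: "ln h < 0" using h0 by simp
            have "g < ln d / ln h" using l2 lh by (simp add: neg_less_divide_eq mult.commute)
            thus ?thesis unfolding f_def using False real d_def h_def by simp
          qed
        qed
      qed
    qed
    thus "eventually (\<lambda>z. y < (if v z = v x then \<infinity> else ereal (ln (norm (v x - v z)) / ln \<bar>x - z\<bar>))) (at x within {0..1})"
      unfolding f_def .
  qed
  thus ?thesis unfolding r_def x_def .
qed


end
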